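(* Assume Conditions (A) and (B) below hold. For any $r_0>0$, $$\sup_{\beta\in\beta^*+\mathbb{B}_\Sigma(r_0)}\|E\{e_i(\beta)W_{i,-j}\}\|_2\le\sup_{\beta\in\beta^*+\mathbb{B}_\Sigma(r_0)}\|E\{e_i(\beta)W_i\}\|_2\le\tfrac12f_um_3r_0^2.$$ In addition, if Condition (D) holds, then $\sup_{\beta\in\beta^*+\mathbb{B}_\Sigma(r_0)}|E\{e_i(\beta)\omega_i\}|\le f_ub_Xr_0^2/2$.
   Context: Fix $\tau\in(0,1)$. Let $(Y_i,X_i)$ be distributed as $(Y,X)\in\mathbb{R}\times\mathbb{R}^p$ (first coordinate of $X$ equal to 1), with conditional $\tau$-quantile $X^T\beta^*$ and conditional lower expected shortfall $\tau^{-1}\int_0^\tau\mathcal{Q}_u(Y\mid X)du=X^T\theta^*$. Let $\varepsilon=Y-X^T\beta^*$, $\varepsilon_-=\min(\varepsilon,0)$, $\Sigma=E(XX^T)$ (positive definite), $\|u\|_\Sigma=\|\Sigma^{1/2}u\|_2$, $\mathbb{B}_\Sigma(r)=\{u:\|u\|_\Sigma\le r\}$, $m_3=\sup_{\|u\|_2=1}E|X^Tu|^3/\{E(X^Tu)^2\}^{3/2}$, $s=\max(\|\beta^*\|_0,\|\theta^*\|_0)$, $\mathbb{C}(\mathcal{S})=\{\delta:\|\delta_{\mathcal{S}^c}\|_1\le3\|\delta_{\mathcal{S}}\|_1\}$. $Z_i(\beta)=(Y_i-X_i^T\beta)\mathbb{1}(Y_i\le X_i^T\beta)+\tau X_i^T\beta$,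 $e_i(\beta)=Z_i(\beta)-\tau X_i^T\theta^*$. Fix an index $j$; $X_{i,-j}$ removes the $j$th entry; $\Sigma_{-j}=E(X_{-j}X_{-j}^T)$; $W_i=\Sigma^{-1/2}X_i$, $W_{i,-j}=\Sigma_{-j}^{-1/2}X_{i,-j}$. Condition (A): $F_{\varepsilon|X}$ continuously differentiable with $|F_{\varepsilon|X}(t)-F_{\varepsilon|X}(0)|\le f_u|t|$ for all $t$, $f_u>0$; $E(\varepsilon_-^2\mid X)\le\sigma_\varepsilon^2$, $E(|\varepsilon_-|^k\mid X)\le k!\sigma_\varepsilon^2b_\varepsilon^{k-2}/2$ for integers $k\ge3$, constants $b_\varepsilon\ge\sigma_\varepsilon>0$. Condition (B): $s\in[1,\min(p,n)]$; constants $b_X,m_4\ge1$ with $\|X\|_\infty\le b_X$ a.s., $\sup_{\|u\|_2=1}E\{(X^Tu)^4\}/[E\{(X^Tu)^2\}]^2\le m_4$; $\underline{\phi}^2=\inf_{|\mathcal{S}|\le s}\inf_{\delta\in\mathbb{C}(\mathcal{S})}\delta^T\Sigma\delta/\|\delta_{\mathcal{S}}\|_2^2>0$. Condition (D): $\gamma^*=\arg\min_\gamma E(X_j-X_{-j}^T\gamma)^2$ is $s_0$-sparse, $1\le s_0<\min(p,n)$; $\omega_i=X_{i,j}-X_{i,-j}^T\gamma^*$ satisfies $|\omega_i|\le b_X$; (B) holds also for $X_{-j},\Sigma_{-j}$. *)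

theory Defs
  imports "HOL-Analysis.Analysis" "HOL-Probability.Probability"
begin

definition pos_def_mat :: "real^'n^'n \<Rightarrow> bool" where
  "pos_def_mat A \<longleftrightarrow> (\<forall>u. u \<noteq> 0 \<longrightarrow> u \<bullet> (A *v u) > 0)"

definition is_psd_sqrt :: "real^'n^'n \<Rightarrow> real^'n^'n \<Rightarrow> bool" where
  "is_psd_sqrt S A \<longleftrightarrow> transpose S = S \<and> pos_def_mat S \<and> S ** S = A"

definition second_moment :: "'a measure \<Rightarrow> ('a \<Rightarrow> real^'n) \<Rightarrow> real^'n^'n" where
  "second_moment M X = (\<chi> i k. \<integral>\<omega>. X \<omega> $ i * X \<omega> $ k \<partial>M)"

definition l0norm :: "real^'n \<Rightarrow> nat" where
  "l0norm v = card {i. v $ i \<noteq> 0}"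

definition l1norm :: "real^'n \<Rightarrow> real" where
  "l1norm v = (\<Sum>i\<in>UNIV. \<bar>v $ i\<bar>)"

definition restr :: "'n set \<Rightarrow> real^'n \<Rightarrow> real^'n" where
  "restr S v = (\<chi> i. if i \<in> S then v $ i else 0)"

definition cone :: "'n set \<Rightarrow> (real^'n) set" where
  "cone S = {\<delta>. l1norm (restr (- S) \<delta>) \<le> 3 * l1norm (restr S \<delta>)}"

definition re_const :: "real^'n^'n \<Rightarrow> nat \<Rightarrow> real" where
  "re_const Sig s = Inf {(\<delta> \<bullet> (Sig *v \<delta>)) / (norm (restr S \<delta>))\<^sup>2 | S \<delta>.
       card S \<le> s \<and> \<delta> \<in> cone S \<and> \<delta> \<noteq> 0}"

definition m3_const :: "'a measure \<Rightarrow> ('a \<Rightarrow> real^'n) \<Rightarrow> real" where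
  "m3_const M X = Sup {(\<integral>\<omega>. \<bar>X \<omega> \<bullet> u\<bar> ^ 3 \<partial>M) / ((\<integral>\<omega>. (X \<omega> \<bullet> u)\<^sup>2 \<partial>M) powr (3/2)) | u.
       norm u = 1}"

definition is_cond_distr :: "'a measure \<Rightarrow> ('a \<Rightarrow> real^'n) \<Rightarrow> ('a \<Rightarrow> real) \<Rightarrow> (real^'n \<Rightarrow> real measure) \<Rightarrow> bool" where
  "is_cond_distr M X Y K \<longleftrightarrow> K \<in> borel \<rightarrow>\<^sub>M prob_algebra borel \<and>
     (\<forall>A \<in> sets borel. \<forall>B \<in> sets borel.
        measure M {\<omega> \<in> space M. X \<omega> \<in> A \<and> Y \<omega> \<in> B}
          = (\<integral>x. indicator A x * measure (K x) B \<partial>(distr M borel X)))"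

definition cond_quantile :: "(real^'n \<Rightarrow> real measure) \<Rightarrow> real^'n \<Rightarrow> real \<Rightarrow> real" where
  "cond_quantile K x u = Inf {t. u \<le> measure (K x) {..t}}"

text \<open>Conditional distribution function of eps = Y - X^T beta* given X = x.\<close>
definition F_eps :: "(real^'n \<Rightarrow> real measure) \<Rightarrow> real^'n \<Rightarrow> real^'n \<Rightarrow> real \<Rightarrow> real" where
  "F_eps K bstar x t = measure (K x) {..t + x \<bullet> bstar}"

definition Zfun :: "real \<Rightarrow> real \<Rightarrow> real^'n \<Rightarrow> real^'n \<Rightarrow> real" where
  "Zfun \<tau> y x \<beta> = (y - x \<bullet> \<beta>) * (if y \<le> x \<bullet> \<beta> then 1 else 0) + \<tau> * (x \<bullet> \<beta>)"

definition efun :: "real \<Rightarrow> real^'n \<Rightarrow> real \<Rightarrow> real^'n \<Rightarrow> real^'n \<Rightarrow> real" where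
  "efun \<tau> \<theta>star y x \<beta> = Zfun \<tau> y x \<beta> - \<tau> * (x \<bullet> \<theta>star)"

text \<open>Model: conditional tau-quantile X^T beta*, conditional lower ES X^T theta*.\<close>
definition model_QES :: "'a measure \<Rightarrow> ('a \<Rightarrow> real^'n) \<Rightarrow> (real^'n \<Rightarrow> real measure)
     \<Rightarrow> real \<Rightarrow> real^'n \<Rightarrow> real^'n \<Rightarrow> bool" where
  "model_QES M X K \<tau> bstar tstar \<longleftrightarrow>
     (AE x in distr M borel X. cond_quantile K x \<tau> = x \<bullet> bstar \<and>
        (1 / \<tau>) * (LINT u:{0..\<tau>}|lborel. cond_quantile K x u) = x \<bullet> tstar)"

definition conditionA :: "'a measure \<Rightarrow> ('a \<Rightarrow> real^'n) \<Rightarrow> (real^'n \<Rightarrow> real measure)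
     \<Rightarrow> real^'n \<Rightarrow> real \<Rightarrow> real \<Rightarrow> real \<Rightarrow> bool" where
  "conditionA M X K bstar fu se be \<longleftrightarrow> fu > 0 \<and> be \<ge> se \<and> se > 0 \<and>
     (AE x in distr M borel X.
        F_eps K bstar x C1_differentiable_on UNIV \<and>
        (\<forall>t. \<bar>F_eps K bstar x t - F_eps K bstar x 0\<bar> \<le> fu * \<bar>t\<bar>) \<and>
        (\<integral>\<^sup>+ y. ennreal ((min (y - x \<bullet> bstar) 0)\<^sup>2) \<partial>K x) \<le> ennreal (se\<^sup>2) \<and>
        (\<forall>k::nat. k \<ge> 3 \<longrightarrow>
           (\<integral>\<^sup>+ y. ennreal (\<bar>min (y - x \<bullet> bstar) 0\<bar> ^ k) \<partial>K x)
             \<le> ennreal (fact k * se\<^sup>2 * be ^ (k - 2) / 2)))"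

definition design_cond :: "'a measure \<Rightarrow> ('a \<Rightarrow> real^'n) \<Rightarrow> nat \<Rightarrow> real \<Rightarrow> real \<Rightarrow> bool" where
  "design_cond M X s bX m4 \<longleftrightarrow> bX \<ge> 1 \<and> m4 \<ge> 1 \<and>
     (AE \<omega> in M. infnorm (X \<omega>) \<le> bX) \<and>
     (\<forall>u. norm u = 1 \<longrightarrow>
        (\<integral>\<omega>. (X \<omega> \<bullet> u) ^ 4 \<partial>M) / (\<integral>\<omega>. (X \<omega> \<bullet> u)\<^sup>2 \<partial>M)\<^sup>2 \<le> m4) \<and>
     re_const (second_moment M X) s > 0"

definition conditionB :: "'a measure \<Rightarrow> ('a \<Rightarrow> real^'n) \<Rightarrow> nat \<Rightarrow> real^'n \<Rightarrow> real^'n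
     \<Rightarrow> real \<Rightarrow> real \<Rightarrow> bool" where
  "conditionB M X n bstar tstar bX m4 \<longleftrightarrow>
     (let s = max (l0norm bstar) (l0norm tstar) in
       1 \<le> s \<and> s \<le> min CARD('n) n \<and> design_cond M X s bX m4)"

text \<open>X_{-j}: idx enumerates the coordinates other than j.\<close>
definition drop_coord :: "('q \<Rightarrow> 'n) \<Rightarrow> real^'n \<Rightarrow> real^'q" where
  "drop_coord idx x = (\<chi> k. x $ idx k)"

definition conditionD :: "'a measure \<Rightarrow> ('a \<Rightarrow> real^'n) \<Rightarrow> nat \<Rightarrow> 'n \<Rightarrow> ('q \<Rightarrow> 'n)
     \<Rightarrow> real^'q \<Rightarrow> nat \<Rightarrow> nat \<Rightarrow> real \<Rightarrow> real \<Rightarrow> bool" where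
  "conditionD M X n j idx gstar s0 s bX m4 \<longleftrightarrow>
     (\<forall>\<gamma>. (\<integral>\<omega>. (X \<omega> $ j - drop_coord idx (X \<omega>) \<bullet> gstar)\<^sup>2 \<partial>M)
            \<le> (\<integral>\<omega>. (X \<omega> $ j - drop_coord idx (X \<omega>) \<bullet> \<gamma>)\<^sup>2 \<partial>M)) \<and>
     l0norm gstar \<le> s0 \<and> 1 \<le> s0 \<and> s0 < min CARD('n) n \<and>
     (AE \<omega> in M. \<bar>X \<omega> $ j - drop_coord idx (X \<omega>) \<bullet> gstar\<bar> \<le> bX) \<and>
     design_cond M (\<lambda>\<omega>. drop_coord idx (X \<omega>)) s bX m4"

end

theory Submission
  imports Defs "HOL-Probability.Probability"
begin
lemma fub1:
  fixes \<nu> :: "real measure" and a b L :: real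
  assumes P: "prob_space \<nu>" and S: "sets \<nu> = sets borel" and ab: "a \<le> b"
    and lip: "\<And>s. a \<le> s \<Longrightarrow> s \<le> b \<Longrightarrow> measure \<nu> {a<..s} \<le> L * (s - a)"
  shows "(\<integral>\<^sup>+y. ennreal ((b - y) * indicator {a<..b} y) \<partial>\<nu>) \<le> ennreal (L * (b - a)^2 / 2)"
proof -
  interpret prob_space \<nu> by fact
  interpret pair_sigma_finite lborel \<nu> by unfold_locales
  have mb[measurable]: "\<And>A. A \<in> sets borel \<Longrightarrow> A \<in> sets \<nu>" using S by simp
  have sp: "space \<nu> = UNIV" using S sets_eq_imp_space_eq by fastforce
  have e1: "ennreal ((b - y) * indicator {a<..b} y) = (\<integral>\<^sup>+s. indicator {a<..b} y * indicator {y..b} s \<partial>lborel)" for y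
    by (cases "a < y \<and> y \<le> b") (auto simp: nn_integral_cmult_indicator)
  have "(\<integral>\<^sup>+y. ennreal ((b - y) * indicator {a<..b} y) \<partial>\<nu>)
     = (\<integral>\<^sup>+y. (\<integral>\<^sup>+s. indicator {a<..b} y * indicator {y..b} s \<partial>lborel) \<partial>\<nu>)"
    by (simp add: e1)
  also have "\<dots> = (\<integral>\<^sup>+s. (\<integral>\<^sup>+y. indicator {a<..b} y * indicator {y..b} s \<partial>\<nu>) \<partial>lborel)"
  proof -
    have m: "(\<lambda>(s, y). indicator {a<..b} y * indicator {y..b} s :: ennreal) \<in> borel_measurable (lborel \<Otimes>\<^sub>M \<nu>)"
    proof -
      have eqf: "(\<lambda>(s, y). indicator {a<..b} y * indicator {y..b} s :: ennreal)
           = (\<lambda>p. indicator {a<..b} (snd p) * (if snd p \<le> fst p \<and> fst p \<le> b then 1 else 0))"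
        by (auto simp: fun_eq_iff indicator_def)
      have E: "borel_measurable (lborel \<Otimes>\<^sub>M \<nu>) = borel_measurable (borel \<Otimes>\<^sub>M borel)"
        by (rule measurable_cong_sets) (auto intro!: sets_pair_measure_cong simp: S)
      have mf: "(\<lambda>p. indicator {a<..b} (snd p) * (if snd p \<le> fst p \<and> fst p \<le> b then 1 else 0) :: ennreal) \<in> borel_measurable (borel \<Otimes>\<^sub>M borel)"
        by measurable
      show ?thesis unfolding eqf E by (rule mf)
    qed
    show ?thesis using Fubini[OF m] by simp
  qed
  also have "\<dots> = (\<integral>\<^sup>+s. ennreal (measure \<nu> {a<..s}) * indicator {a..b} s \<partial>lborel)"
  proof (rule nn_integral_cong)
    fix s :: real
    have "(\<integral>\<^sup>+y. indicator {a<..b} y * indicator {y..b} s \<partial>\<nu>) = (\<integral>\<^sup>+y. indicator {a..b} s * indicator {a<..s} y \<partial>\<nu>)"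
      by (rule nn_integral_cong) (auto simp: indicator_def)
    also have "\<dots> = ennreal (measure \<nu> {a<..s}) * indicator {a..b} s"
      by (simp add: nn_integral_cmult emeasure_eq_measure mult.commute)
    finally show "(\<integral>\<^sup>+y. indicator {a<..b} y * indicator {y..b} s \<partial>\<nu>) = ennreal (measure \<nu> {a<..s}) * indicator {a..b} s" .
  qed
  also have "\<dots> \<le> (\<integral>\<^sup>+s. ennreal (L * (s - a)) * indicator {a..b} s \<partial>lborel)"
    by (rule nn_integral_mono) (auto simp: indicator_def lip intro!: ennreal_leI)
  also have "\<dots> = ennreal (L * (b - a)^2 / 2)"
  proof (rule nn_integral_has_integral_lebesgue')
    show "0 \<le> L * (x - a)" if "x \<in> {a..b}" for x
      using lip[of x] that measure_nonneg[of \<nu>] by (smt (verit, best) atLeastAtMost_iff mult_nonneg_nonneg)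
    have "((\<lambda>s. L * (s - a)) has_integral (L * (b - a)^2 / 2 - L * (a - a)^2/2)) {a..b}"
      by (rule fundamental_theorem_of_calculus[OF ab])
         (auto intro!: derivative_eq_intros simp: has_real_derivative_iff_has_vector_derivative[symmetric] field_simps)
    then show "((\<lambda>s. L * (s - a)) has_integral (L * (b - a)^2 / 2)) {a..b}" by simp
  qed
  finally show ?thesis .
qed

lemma fub2:
  fixes \<nu> :: "real measure" and a b L :: real
  assumes P: "prob_space \<nu>" and S: "sets \<nu> = sets borel" and ab: "a \<le> b"
    and lip: "\<And>s. a \<le> s \<Longrightarrow> s \<le> b \<Longrightarrow> measure \<nu> {s<..b} \<le> L * (b - s)"
  shows "(\<integral>\<^sup>+y. ennreal ((y - a) * indicator {a<..b} y) \<partial>\<nu>) \<le> ennreal (L * (b - a)^2 / 2)"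
proof -
  interpret prob_space \<nu> by fact
  interpret pair_sigma_finite lborel \<nu> by unfold_locales
  have mb[measurable]: "\<And>A. A \<in> sets borel \<Longrightarrow> A \<in> sets \<nu>" using S by simp
  have sp: "space \<nu> = UNIV" using S sets_eq_imp_space_eq by fastforce
  have e1: "ennreal ((y - a) * indicator {a<..b} y) = (\<integral>\<^sup>+s. indicator {a<..b} y * indicator {a..<y} s \<partial>lborel)" for y
    by (cases "a < y \<and> y \<le> b") (auto simp: nn_integral_cmult_indicator)
  have "(\<integral>\<^sup>+y. ennreal ((y - a) * indicator {a<..b} y) \<partial>\<nu>)
     = (\<integral>\<^sup>+y. (\<integral>\<^sup>+s. indicator {a<..b} y * indicator {a..<y} s \<partial>lborel) \<partial>\<nu>)"
    by (simp add: e1)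
  also have "\<dots> = (\<integral>\<^sup>+s. (\<integral>\<^sup>+y. indicator {a<..b} y * indicator {a..<y} s \<partial>\<nu>) \<partial>lborel)"
  proof -
    have m: "(\<lambda>(s, y). indicator {a<..b} y * indicator {a..<y} s :: ennreal) \<in> borel_measurable (lborel \<Otimes>\<^sub>M \<nu>)"
    proof -
      have eqf: "(\<lambda>(s, y). indicator {a<..b} y * indicator {a..<y} s :: ennreal)
           = (\<lambda>p. indicator {a<..b} (snd p) * (if a \<le> fst p \<and> fst p < snd p then 1 else 0))"
        by (auto simp: fun_eq_iff indicator_def)
      have E: "borel_measurable (lborel \<Otimes>\<^sub>M \<nu>) = borel_measurable (borel \<Otimes>\<^sub>M borel)"
        by (rule measurable_cong_sets) (auto intro!: sets_pair_measure_cong simp: S)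
      have mf: "(\<lambda>p. indicator {a<..b} (snd p) * (if a \<le> fst p \<and> fst p < snd p then 1 else 0) :: ennreal) \<in> borel_measurable (borel \<Otimes>\<^sub>M borel)"
        by measurable
      show ?thesis unfolding eqf E by (rule mf)
    qed
    show ?thesis using Fubini[OF m] by simp
  qed
  also have "\<dots> = (\<integral>\<^sup>+s. ennreal (measure \<nu> {s<..b}) * indicator {a..<b} s \<partial>lborel)"
  proof (rule nn_integral_cong)
    fix s :: real
    have "(\<integral>\<^sup>+y. indicator {a<..b} y * indicator {a..<y} s \<partial>\<nu>) = (\<integral>\<^sup>+y. indicator {a..<b} s * indicator {s<..b} y \<partial>\<nu>)"
      by (rule nn_integral_cong) (auto simp: indicator_def)
    also have "\<dots> = ennreal (measure \<nu> {s<..b}) * indicator {a..<b} s"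
      by (simp add: nn_integral_cmult emeasure_eq_measure mult.commute)
    finally show "(\<integral>\<^sup>+y. indicator {a<..b} y * indicator {a..<y} s \<partial>\<nu>) = ennreal (measure \<nu> {s<..b}) * indicator {a..<b} s" .
  qed
  also have "\<dots> \<le> (\<integral>\<^sup>+s. ennreal (L * (b - s)) * indicator {a..b} s \<partial>lborel)"
    by (rule nn_integral_mono) (auto simp: indicator_def lip intro!: ennreal_leI)
  also have "\<dots> = ennreal (L * (b - a)^2 / 2)"
  proof (rule nn_integral_has_integral_lebesgue')
    show "0 \<le> L * (b - x)" if "x \<in> {a..b}" for x
      using lip[of x] that measure_nonneg[of \<nu>] by (smt (verit, best) atLeastAtMost_iff mult_nonneg_nonneg)
    have "((\<lambda>s. L * (b - s)) has_integral ((- L * (b - b)^2 / 2) - (- L * (b - a)^2/2))) {a..b}"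
      by (rule fundamental_theorem_of_calculus[OF ab])
         (auto intro!: derivative_eq_intros simp: has_real_derivative_iff_has_vector_derivative[symmetric] field_simps)
    then show "((\<lambda>s. L * (b - s)) has_integral (L * (b - a)^2 / 2)) {a..b}" by simp
  qed
  finally show ?thesis .
qed

lemma abs_le_1_sq: "\<bar>z::real\<bar> \<le> 1 + z^2"
proof -
  have "0 \<le> (\<bar>z\<bar> - 1/2)^2" by simp
  also have "(\<bar>z\<bar> - 1/2)^2 = z^2 - \<bar>z\<bar> + 1/4" by (simp add: power2_eq_square algebra_simps abs_mult_self_eq)
  finally show ?thesis by linarith
qed

lemma core1d:
  fixes \<nu> :: "real measure" and \<tau> ts t c fu :: real
  assumes P: "prob_space \<nu>" and S: "sets \<nu> = sets borel"
    and contG: "\<And>s. isCont (\<lambda>s. measure \<nu> {..s}) s"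
    and lip: "\<And>s. \<bar>measure \<nu> {..s} - measure \<nu> {..ts}\<bar> \<le> fu * \<bar>s - ts\<bar>"
    and q: "Inf {t. \<tau> \<le> measure \<nu> {..t}} = ts"
    and es: "(1/\<tau>) * (LINT u:{0..\<tau>}|lborel. Inf {t. u \<le> measure \<nu> {..t}}) = c"
    and mom: "(\<integral>\<^sup>+ y. ennreal ((min (y - ts) 0)^2) \<partial>\<nu>) < \<infinity>"
    and tau: "0 < \<tau>" "\<tau> < 1"
  shows "integrable \<nu> (\<lambda>y. (y - t) * (if y \<le> t then 1 else 0) + \<tau> * t - \<tau> * c)
       \<and> \<bar>\<integral>y. ((y - t) * (if y \<le> t then 1 else 0) + \<tau> * t - \<tau> * c) \<partial>\<nu>\<bar> \<le> fu * (t - ts)^2 / 2"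
proof -
  interpret real_distribution \<nu> using P S by (simp add: real_distribution_def real_distribution_axioms_def)
  interpret cdf_distribution \<nu> by unfold_locales
  have sp: "space \<nu> = UNIV" by simp
  have pU: "measure \<nu> UNIV = 1" using prob_space sp by simp
  have Ceq: "C s = measure \<nu> {..s}" for s by (simp add: cdf_def2)
  have Ieq: "Inf {t. u \<le> measure \<nu> {..t}} = I u" for u by (simp add: cdf_def2)
  have Its: "I \<tau> = ts" using q Ieq by simp
  have ge: "\<tau> \<le> C ts" using pseudoinverse[of \<tau> ts] tau Its by simp
  have lt: "C s < \<tau>" if "s < ts" for s
    using pseudoinverse[of \<tau> s] tau Its that by auto
  have le: "C ts \<le> \<tau>"
  proof (rule tendsto_upperbound)
    show "(C \<longlongrightarrow> C ts) (at_left ts)"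
      using contG[of ts] unfolding Ceq[abs_def] isCont_def by (rule tendsto_within_subset) simp
    show "\<forall>\<^sub>F x in at_left ts. C x \<le> \<tau>"
      using eventually_at_left_real[of "ts - 1" ts] by (rule eventually_mono) (auto intro: lt less_imp_le)
  qed simp
  have Gts: "measure \<nu> {..ts} = \<tau>" using ge le Ceq by simp
  have [measurable]: "\<And>A. A \<in> sets borel \<Longrightarrow> A \<in> sets \<nu>" using S by simp
  have mnu: "borel_measurable \<nu> = borel_measurable borel"
    by (rule measurable_cong_sets) (simp_all add: S)
  have isq: "integrable \<nu> (\<lambda>y. (min (y - ts) 0)^2)"
    by (rule integrableI_bounded) (use mom in \<open>simp_all add: mnu\<close>)
  define D where "D y = 1 + (min (y - ts) 0)^2 + \<bar>t - ts\<bar> + \<bar>ts\<bar>" for y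
  have iD: "integrable \<nu> D" unfolding D_def using isq by simp
  have Dm: "\<bar>min (y - ts) 0\<bar> \<le> 1 + (min (y - ts) 0)^2" for y by (rule abs_le_1_sq)
  have i1: "integrable \<nu> (\<lambda>y. (y - t) * (if y \<le> t then 1 else 0))"
  proof (rule Bochner_Integration.integrable_bound[OF iD])
    show "(\<lambda>y. (y - t) * (if y \<le> t then 1 else 0)) \<in> borel_measurable \<nu>" unfolding mnu by measurable
    show "AE y in \<nu>. norm ((y - t) * (if y \<le> t then 1 else 0)) \<le> norm (D y)"
    proof (rule AE_I2)
      fix y
      have "\<bar>(y - t) * (if y \<le> t then 1 else 0)\<bar> \<le> \<bar>min (y - ts) 0\<bar> + \<bar>t - ts\<bar>" by auto
      also have "\<dots> \<le> D y" using Dm[of y] unfolding D_def by linarith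
      finally show "norm ((y - t) * (if y \<le> t then 1 else 0)) \<le> norm (D y)" by simp
    qed
  qed
  have i2: "integrable \<nu> (\<lambda>y. y * indicator {..ts} y)"
  proof (rule Bochner_Integration.integrable_bound[OF iD])
    show "(\<lambda>y. y * indicator {..ts} y) \<in> borel_measurable \<nu>" unfolding mnu by measurable
    show "AE y in \<nu>. norm (y * indicator {..ts} y) \<le> norm (D y)"
    proof (rule AE_I2)
      fix y
      have "\<bar>y * indicator {..ts} y\<bar> \<le> \<bar>min (y - ts) 0\<bar> + \<bar>ts\<bar>" by (auto simp: indicator_def)
      also have "\<dots> \<le> D y" using Dm[of y] unfolding D_def by linarith
      finally show "norm (y * indicator {..ts} y) \<le> norm (D y)" by simp
    qed
  qed
  have iE: "integrable \<nu> (\<lambda>y. (y - t) * (if y \<le> t then 1 else 0) + \<tau> * t - \<tau> * c)"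
    using i1 by simp
  have fu0: "0 \<le> fu"
  proof -
    have "\<bar>measure \<nu> {..ts + 1} - measure \<nu> {..ts}\<bar> \<le> fu * \<bar>ts + 1 - ts\<bar>" by (rule lip)
    then show ?thesis by simp
  qed
  let ?\<Omega> = "restrict_space lborel {0<..<1::real}"
  have sO: "sets ?\<Omega> = sets (restrict_space borel {0<..<1::real})" by (simp add: sets_restrict_space)
  have mI: "I \<in> borel_measurable ?\<Omega>" using measurable_CI unfolding measurable_cong_sets[OF sO refl] .
  have B1: "(\<integral>y. y * indicator {..ts} y \<partial>\<nu>) = (\<integral>y. y * indicator {..ts} y \<partial>(distr ?\<Omega> borel I))"
    using distr_I_eq_M by simp
  also have "\<dots> = (\<integral>u. I u * indicator {..ts} (I u) \<partial>?\<Omega>)"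
    by (rule integral_distr[OF mI]) measurable
  also have "\<dots> = (\<integral>u. indicator {0<..<1} u *\<^sub>R (I u * indicator {..ts} (I u)) \<partial>lborel)"
    by (rule integral_restrict_space) simp
  finally have B2: "(\<integral>y. y * indicator {..ts} y \<partial>\<nu>) = (\<integral>u. indicator {0<..<1} u *\<^sub>R (I u * indicator {..ts} (I u)) \<partial>lborel)" .
  have mf: "(\<lambda>y::real. y * indicator {..ts} y) \<in> borel_measurable borel" by measurable
  have iG: "integrable lborel (\<lambda>u. indicator {0<..<1} u *\<^sub>R (I u * indicator {..ts} (I u)))"
  proof -
    have "integrable (distr ?\<Omega> borel I) (\<lambda>y. y * indicator {..ts} y)" using i2 distr_I_eq_M by simp
    then have "integrable ?\<Omega> (\<lambda>u. I u * indicator {..ts} (I u))"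
      using integrable_distr_eq[OF mI mf] by simp
    then show ?thesis by (subst (asm) integrable_restrict_space) simp_all
  qed
  have ptw: "indicator {0..\<tau>} u *\<^sub>R Inf {t. u \<le> measure \<nu> {..t}}
      = indicator {0<..<1} u *\<^sub>R (I u * indicator {..ts} (I u)) + indicator {0} u * I 0" for u
  proof -
    have "u \<le> \<tau> \<longleftrightarrow> I u \<le> ts" if "0 < u" "u < 1" using pseudoinverse[of u ts] that Gts Ceq by simp
    then show ?thesis using tau by (auto simp: Ieq indicator_def)
  qed
  have L: "(LINT u:{0..\<tau>}|lborel. Inf {t. u \<le> measure \<nu> {..t}}) = (\<integral>y. y * indicator {..ts} y \<partial>\<nu>)"
  proof -
    have iK: "integrable lborel (\<lambda>u. indicator {0} u * I 0 :: real)"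
      by (intro Bochner_Integration.integrable_mult_left integrable_real_indicator) (auto simp: emeasure_eq_measure)
    have K0: "(\<integral>u. indicator {0} u * I 0 \<partial>lborel) = 0"
      by (rule integral_eq_zero_AE) (use AE_lborel_singleton[of 0] in \<open>auto elim!: eventually_mono\<close>)
    have "(LINT u:{0..\<tau>}|lborel. Inf {t. u \<le> measure \<nu> {..t}})
        = (\<integral>u. indicator {0<..<1} u *\<^sub>R (I u * indicator {..ts} (I u)) + indicator {0} u * I 0 \<partial>lborel)"
      unfolding set_lebesgue_integral_def ptw ..
    also have "\<dots> = (\<integral>u. indicator {0<..<1} u *\<^sub>R (I u * indicator {..ts} (I u)) \<partial>lborel)"
      using Bochner_Integration.integral_add[OF iG iK] K0 by simp
    finally show ?thesis using B2 by simp
  qed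
  have tc: "\<tau> * c = (\<integral>y. y * indicator {..ts} y \<partial>\<nu>)" using es L tau by (auto simp: field_simps)
  define R where "R y = (y - t) * (if y \<le> t then 1 else 0) - (y - t) * indicator {..ts} y" for y
  have i3: "integrable \<nu> (\<lambda>y. (y - t) * indicator {..ts} y)"
  proof -
    have "integrable \<nu> (\<lambda>y. y * indicator {..ts} y - t * indicator {..ts} y)"
      using i2 by (intro Bochner_Integration.integrable_diff Bochner_Integration.integrable_mult_right integrable_real_indicator) (auto simp: emeasure_eq_measure)
    then show ?thesis by (simp add: algebra_simps)
  qed
  have I3: "(\<integral>y. (y - t) * indicator {..ts} y \<partial>\<nu>) = \<tau> * c - t * \<tau>"
  proof -
    have "(\<integral>y. (y - t) * indicator {..ts} y \<partial>\<nu>) = (\<integral>y. y * indicator {..ts} y - t * indicator {..ts} y \<partial>\<nu>)"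
      by (simp add: algebra_simps)
    also have "\<dots> = (\<integral>y. y * indicator {..ts} y \<partial>\<nu>) - (\<integral>y. t * indicator {..ts} y \<partial>\<nu>)"
      using i2 by (intro Bochner_Integration.integral_diff Bochner_Integration.integrable_mult_right integrable_real_indicator) (auto simp: emeasure_eq_measure)
    also have "(\<integral>y. t * indicator {..ts} y \<partial>\<nu>) = t * \<tau>" using Gts by simp
    finally show ?thesis using tc by simp
  qed
  have iR: "integrable \<nu> R" unfolding R_def using i1 i3 by simp
  have eR: "(\<integral>y. ((y - t) * (if y \<le> t then 1 else 0) + \<tau> * t - \<tau> * c) \<partial>\<nu>) = integral\<^sup>L \<nu> R"
  proof -
    have "(\<integral>y. ((y - t) * (if y \<le> t then 1 else 0) + \<tau> * t - \<tau> * c) \<partial>\<nu>)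
        = (\<integral>y. (y - t) * (if y \<le> t then 1 else 0) \<partial>\<nu>) + \<tau> * t - \<tau> * c"
      using i1 pU by simp
    moreover have "integral\<^sup>L \<nu> R = (\<integral>y. (y - t) * (if y \<le> t then 1 else 0) \<partial>\<nu>) - (\<integral>y. (y - t) * indicator {..ts} y \<partial>\<nu>)"
      unfolding R_def using i1 i3 by simp
    ultimately show ?thesis using I3 by (simp add: algebra_simps)
  qed
  have bnd: "\<bar>integral\<^sup>L \<nu> R\<bar> \<le> fu * (t - ts)^2 / 2"
  proof (cases "ts \<le> t")
    case True
    define g where "g y = (t - y) * indicator {ts<..t} y" for y
    have Rg: "R = (\<lambda>y. - g y)" using True by (auto simp: R_def g_def fun_eq_iff indicator_def)
    have ig: "integrable \<nu> g" unfolding g_def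
      by (rule integrable_const_bound[where B="\<bar>t - ts\<bar>"]) (auto simp: indicator_def mnu)
    have g0: "0 \<le> g y" for y by (auto simp: g_def indicator_def)
    have "ennreal (integral\<^sup>L \<nu> g) = (\<integral>\<^sup>+y. ennreal (g y) \<partial>\<nu>)"
      using nn_integral_eq_integral[OF ig] g0 by simp
    also have "\<dots> \<le> ennreal (fu * (t - ts)^2 / 2)" unfolding g_def
    proof (rule fub1[OF P S True])
      fix s assume s: "ts \<le> s" "s \<le> t"
      show "measure \<nu> {ts<..s} \<le> fu * (s - ts)"
      proof (cases "s = ts")
        case False
        then have "measure \<nu> {ts<..s} = C s - C ts" using s cdf_diff_eq[of ts s] by simp
        then show ?thesis using lip[of s] s Ceq by (simp add: abs_le_iff)
      qed simp
    qed
    finally have "integral\<^sup>L \<nu> g \<le> fu * (t - ts)^2 / 2" using fu0 by (simp add: ennreal_le_iff)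
    moreover have "0 \<le> integral\<^sup>L \<nu> g" using g0 by (simp add: integral_nonneg_AE)
    ultimately show ?thesis unfolding Rg by simp
  next
    case False
    then have ft: "t \<le> ts" by simp
    define g where "g y = (y - t) * indicator {t<..ts} y" for y
    have Rg: "R = (\<lambda>y. - g y)" using False by (auto simp: R_def g_def fun_eq_iff indicator_def)
    have ig: "integrable \<nu> g" unfolding g_def
      by (rule integrable_const_bound[where B="\<bar>t - ts\<bar>"]) (auto simp: indicator_def mnu)
    have g0: "0 \<le> g y" for y by (auto simp: g_def indicator_def)
    have "ennreal (integral\<^sup>L \<nu> g) = (\<integral>\<^sup>+y. ennreal (g y) \<partial>\<nu>)"
      using nn_integral_eq_integral[OF ig] g0 by simp
    also have "\<dots> \<le> ennreal (fu * (ts - t)^2 / 2)" unfolding g_def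
    proof (rule fub2[OF P S ft])
      fix s assume s: "t \<le> s" "s \<le> ts"
      show "measure \<nu> {s<..ts} \<le> fu * (ts - s)"
      proof (cases "s = ts")
        case False
        then have "measure \<nu> {s<..ts} = C ts - C s" using s cdf_diff_eq[of s ts] by simp
        then show ?thesis using lip[of s] s Ceq by (simp add: abs_le_iff)
      qed simp
    qed
    finally have "integral\<^sup>L \<nu> g \<le> fu * (ts - t)^2 / 2" using fu0 by (simp add: ennreal_le_iff)
    moreover have "0 \<le> integral\<^sup>L \<nu> g" using g0 by (simp add: integral_nonneg_AE)
    moreover have "(ts - t)^2 = (t - ts)^2" by (simp add: power2_commute)
    ultimately show ?thesis unfolding Rg by simp
  qed
  show ?thesis using iE eR bnd by simp
qed

lemma integral_bind_kernel:
  fixes f :: "'b \<Rightarrow> real"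
  assumes k[measurable]: "\<kappa> \<in> measurable L (subprob_algebra N)"
    and ne: "space L \<noteq> {}"
    and f[measurable]: "f \<in> borel_measurable N"
    and int: "integrable (L \<bind> \<kappa>) f"
  shows "(AE x in L. integrable (\<kappa> x) f) \<and> integral\<^sup>L (L \<bind> \<kappa>) f = (\<integral>x. integral\<^sup>L (\<kappa> x) f \<partial>L)"
proof -
  have sB: "sets (L \<bind> \<kappa>) = sets N" by (rule sets_bind_measurable[OF k ne])
  have fB[measurable]: "f \<in> borel_measurable (L \<bind> \<kappa>)" using f unfolding measurable_cong_sets[OF sB refl] .
  define a where "a x = (\<integral>\<^sup>+y. ennreal (f y) \<partial>\<kappa> x)" for x
  define b where "b x = (\<integral>\<^sup>+y. ennreal (- f y) \<partial>\<kappa> x)" for x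
  define n where "n x = (\<integral>\<^sup>+y. ennreal (norm (f y)) \<partial>\<kappa> x)" for x
  have ma[measurable]: "a \<in> borel_measurable L" unfolding a_def by measurable
  have mb[measurable]: "b \<in> borel_measurable L" unfolding b_def by measurable
  have mn[measurable]: "n \<in> borel_measurable L" unfolding n_def by measurable
  have "(\<integral>\<^sup>+x. n x \<partial>L) = (\<integral>\<^sup>+y. ennreal (norm (f y)) \<partial>(L \<bind> \<kappa>))"
    unfolding n_def by (rule nn_integral_bind[symmetric, OF _ k]) measurable
  also have "\<dots> < \<infinity>" using int by (simp add: integrable_iff_bounded)
  finally have nfin: "(\<integral>\<^sup>+x. n x \<partial>L) < \<infinity>" .
  have AEn: "AE x in L. n x \<noteq> \<infinity>" by (rule nn_integral_PInf_AE) (use nfin in auto)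
  have an: "a x \<le> n x" "b x \<le> n x" for x
    unfolding a_def b_def n_def by (auto intro!: nn_integral_mono ennreal_leI)
  have fina: "a x \<noteq> \<top>" if "n x \<noteq> \<top>" for x using an(1)[of x] that by (auto simp: top_unique)
  have finb: "b x \<noteq> \<top>" if "n x \<noteq> \<top>" for x using an(2)[of x] that by (auto simp: top_unique)
  have intx: "integrable (\<kappa> x) f" if "x \<in> space L" "n x \<noteq> \<infinity>" for x
  proof (rule integrableI_bounded)
    have "sets (\<kappa> x) = sets N" using that by (simp add: sets_kernel[OF k])
    then show "f \<in> borel_measurable (\<kappa> x)" using f measurable_cong_sets by blast
    show "(\<integral>\<^sup>+y. ennreal (norm (f y)) \<partial>\<kappa> x) < \<infinity>" using that(2) unfolding n_def by (simp add: top.not_eq_extremum)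
  qed
  have AEi: "AE x in L. integrable (\<kappa> x) f" using AEn AE_space by eventually_elim (auto intro: intx)
  have AEeq: "AE x in L. integral\<^sup>L (\<kappa> x) f = enn2real (a x) - enn2real (b x)"
    using AEn AE_space by eventually_elim (auto simp: a_def b_def intro!: real_lebesgue_integral_def intx)
  have ia: "integrable L (\<lambda>x. enn2real (a x))"
  proof (rule integrableI_bounded)
    show "(\<lambda>x. enn2real (a x)) \<in> borel_measurable L" by measurable
    have "(\<integral>\<^sup>+x. ennreal (norm (enn2real (a x))) \<partial>L) \<le> (\<integral>\<^sup>+x. n x \<partial>L)"
      by (intro nn_integral_mono) (use an(1) in \<open>auto simp: ennreal_enn2real_if\<close>)
    then show "(\<integral>\<^sup>+x. ennreal (norm (enn2real (a x))) \<partial>L) < \<infinity>" using nfin by (rule le_less_trans)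
  qed
  have ib: "integrable L (\<lambda>x. enn2real (b x))"
  proof (rule integrableI_bounded)
    show "(\<lambda>x. enn2real (b x)) \<in> borel_measurable L" by measurable
    have "(\<integral>\<^sup>+x. ennreal (norm (enn2real (b x))) \<partial>L) \<le> (\<integral>\<^sup>+x. n x \<partial>L)"
      by (intro nn_integral_mono) (use an(2) in \<open>auto simp: ennreal_enn2real_if\<close>)
    then show "(\<integral>\<^sup>+x. ennreal (norm (enn2real (b x))) \<partial>L) < \<infinity>" using nfin by (rule le_less_trans)
  qed
  have ea: "(\<integral>x. enn2real (a x) \<partial>L) = enn2real (\<integral>\<^sup>+x. a x \<partial>L)"
  proof (rule enn2real_nn_integral_eq_integral[symmetric])
    show "AE x in L. a x = ennreal (enn2real (a x))"
      using AEn by eventually_elim (simp add: ennreal_enn2real_if fina)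
  qed auto
  have eb: "(\<integral>x. enn2real (b x) \<partial>L) = enn2real (\<integral>\<^sup>+x. b x \<partial>L)"
  proof (rule enn2real_nn_integral_eq_integral[symmetric])
    show "AE x in L. b x = ennreal (enn2real (b x))"
      using AEn by eventually_elim (simp add: ennreal_enn2real_if finb)
  qed auto
  have "integral\<^sup>L (L \<bind> \<kappa>) f = enn2real (\<integral>\<^sup>+y. ennreal (f y) \<partial>(L \<bind> \<kappa>)) - enn2real (\<integral>\<^sup>+y. ennreal (- f y) \<partial>(L \<bind> \<kappa>))"
    by (rule real_lebesgue_integral_def[OF int])
  also have "(\<integral>\<^sup>+y. ennreal (f y) \<partial>(L \<bind> \<kappa>)) = (\<integral>\<^sup>+x. a x \<partial>L)"
    unfolding a_def by (rule nn_integral_bind[OF _ k]) measurable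
  also have "(\<integral>\<^sup>+y. ennreal (- f y) \<partial>(L \<bind> \<kappa>)) = (\<integral>\<^sup>+x. b x \<partial>L)"
    unfolding b_def by (rule nn_integral_bind[OF _ k]) measurable
  also have "enn2real (\<integral>\<^sup>+x. a x \<partial>L) - enn2real (\<integral>\<^sup>+x. b x \<partial>L) = (\<integral>x. enn2real (a x) - enn2real (b x) \<partial>L)"
    using ea eb ia ib by simp
  also have "\<dots> = (\<integral>x. integral\<^sup>L (\<kappa> x) f \<partial>L)"
    by (rule integral_cong_AE) (use AEeq in \<open>auto elim!: eventually_mono\<close>)
  finally show ?thesis using AEi by simp
qed

lemma Kx_facts:
  assumes "is_cond_distr M X Y K"
  shows "K \<in> borel \<rightarrow>\<^sub>M subprob_algebra borel" "prob_space (K x)" "sets (K x) = sets borel"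
proof -
  have K: "K \<in> borel \<rightarrow>\<^sub>M prob_algebra borel" using assms by (simp add: is_cond_distr_def)
  show "K \<in> borel \<rightarrow>\<^sub>M subprob_algebra borel" using K by (rule measurable_prob_algebraD)
  have "K x \<in> space (prob_algebra borel)" using K by (rule measurable_space) simp
  then show "prob_space (K x)" "sets (K x) = sets borel" by (auto simp: space_prob_algebra)
qed

lemma joint_eq:
  fixes M :: "'a measure" and X :: "'a \<Rightarrow> real^'n" and Y :: "'a \<Rightarrow> real" and K
  assumes P: "prob_space M" and mX[measurable]: "X \<in> borel_measurable M" and mY[measurable]: "Y \<in> borel_measurable M"
    and C: "is_cond_distr M X Y K"
  shows "distr M (borel \<Otimes>\<^sub>M borel) (\<lambda>\<omega>. (X \<omega>, Y \<omega>))
       = distr M borel X \<bind> (\<lambda>x. distr (K x) (borel \<Otimes>\<^sub>M borel) (Pair x))"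
proof -
  interpret prob_space M by fact
  let ?N = "borel \<Otimes>\<^sub>M borel :: ((real^'n) \<times> real) measure"
  let ?PX = "distr M borel X"
  note Kf = Kx_facts[OF C]
  interpret PX: prob_space ?PX by (rule prob_space_distr) simp
  have Ks[measurable]: "K \<in> borel \<rightarrow>\<^sub>M subprob_algebra borel" by (rule Kf(1))
  have kap_b: "(\<lambda>x. distr (K x) ?N (Pair x)) \<in> borel \<rightarrow>\<^sub>M subprob_algebra ?N"
  proof (rule measurable_distr2[OF _ Ks])
    have "case_prod Pair = (\<lambda>p::(real^'n) \<times> real. p)" by (simp add: fun_eq_iff)
    then show "case_prod Pair \<in> (borel \<Otimes>\<^sub>M borel) \<rightarrow>\<^sub>M ?N" by simp
  qed
  have kap: "(\<lambda>x. distr (K x) ?N (Pair x)) \<in> ?PX \<rightarrow>\<^sub>M subprob_algebra ?N"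
    using kap_b by (simp add: measurable_cong_sets[OF sets_distr refl])
  have neP: "space ?PX \<noteq> {}" by simp
  let ?E = "{a \<times> b | a b. a \<in> sets (borel :: (real^'n) measure) \<and> b \<in> sets (borel :: real measure)}"
  have sN: "sets ?N = sigma_sets UNIV ?E" by (simp add: sets_pair_measure)
  show ?thesis
  proof (rule measure_eqI_generator_eq[where E = ?E and \<Omega> = UNIV and A = "\<lambda>_. UNIV"])
    show "Int_stable ?E" by (rule Int_stable_pair_measure_generator[of borel borel, simplified])
    show "?E \<subseteq> Pow UNIV" by simp
    show "sets (distr M ?N (\<lambda>\<omega>. (X \<omega>, Y \<omega>))) = sigma_sets UNIV ?E" using sN by simp
    show "sets (?PX \<bind> (\<lambda>x. distr (K x) ?N (Pair x))) = sigma_sets UNIV ?E"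
      using sets_bind_measurable[OF kap neP] sN by simp
    show "range (\<lambda>_. UNIV) \<subseteq> ?E" by auto (metis UNIV_Times_UNIV sets.top space_borel)
    show "(\<Union>i::nat. UNIV) = (UNIV :: ((real^'n) \<times> real) set)" by simp
    show "emeasure (distr M ?N (\<lambda>\<omega>. (X \<omega>, Y \<omega>))) UNIV \<noteq> \<infinity>" for i :: nat
    proof -
      interpret D: prob_space "distr M ?N (\<lambda>\<omega>. (X \<omega>, Y \<omega>))" by (rule prob_space_distr) simp
      have "UNIV = space (distr M ?N (\<lambda>\<omega>. (X \<omega>, Y \<omega>)))" by (simp add: space_pair_measure)
      then show ?thesis using D.emeasure_space_1 by simp
    qed
    fix Z assume "Z \<in> ?E"
    then obtain a b where Z: "Z = a \<times> b" and a: "a \<in> sets borel" and b: "b \<in> sets borel" by auto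
    have "emeasure (distr M ?N (\<lambda>\<omega>. (X \<omega>, Y \<omega>))) Z = emeasure M {\<omega> \<in> space M. X \<omega> \<in> a \<and> Y \<omega> \<in> b}"
      using a b unfolding Z by (subst emeasure_distr) (auto intro!: arg_cong[where f="emeasure M"])
    also have "\<dots> = ennreal (measure M {\<omega> \<in> space M. X \<omega> \<in> a \<and> Y \<omega> \<in> b})"
      by (simp add: emeasure_eq_measure)
    also have "\<dots> = ennreal (\<integral>x. indicator a x * measure (K x) b \<partial>?PX)"
      using C a b by (simp add: is_cond_distr_def)
    also have "\<dots> = (\<integral>\<^sup>+x. ennreal (indicator a x * measure (K x) b) \<partial>?PX)"
    proof (rule nn_integral_eq_integral[symmetric])
      have mK: "(\<lambda>x. measure (K x) b) \<in> borel_measurable borel"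
        using measurable_compose[OF Ks measurable_measure_subprob_algebra[OF b]] .
      show "integrable ?PX (\<lambda>x. indicator a x * measure (K x) b)"
      proof (rule PX.integrable_const_bound[where B=1])
        show "AE x in ?PX. norm (indicator a x * measure (K x) b) \<le> 1"
          by (auto simp: indicator_def intro!: prob_space.prob_le_1[OF Kf(2)])
        show "(\<lambda>x. indicator a x * measure (K x) b) \<in> borel_measurable ?PX"
          using mK a by simp
      qed
      show "AE x in ?PX. 0 \<le> indicator a x * measure (K x) b" by simp
    qed
    also have "\<dots> = (\<integral>\<^sup>+x. emeasure (distr (K x) ?N (Pair x)) Z \<partial>?PX)"
    proof (rule nn_integral_cong)
      fix x
      interpret Kx: prob_space "K x" by (rule Kf(2))
      have mp0: "Pair x \<in> (borel::real measure) \<rightarrow>\<^sub>M ?N" by measurable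
      have mp: "Pair x \<in> K x \<rightarrow>\<^sub>M ?N" using mp0 unfolding measurable_cong_sets[OF Kf(3)[of x] refl] .
      have spK: "space (K x) = UNIV" using sets_eq_imp_space_eq[OF Kf(3)[of x]] by simp
      have "emeasure (distr (K x) ?N (Pair x)) Z = emeasure (K x) (Pair x -` Z \<inter> space (K x))"
        using a b unfolding Z by (intro emeasure_distr mp) auto
      also have "\<dots> = indicator a x * emeasure (K x) b"
        by (auto simp: Z indicator_def spK)
      finally show "ennreal (indicator a x * measure (K x) b) = emeasure (distr (K x) ?N (Pair x)) Z"
        by (simp add: Kx.emeasure_eq_measure indicator_def)
    qed
    also have "\<dots> = emeasure (?PX \<bind> (\<lambda>x. distr (K x) ?N (Pair x))) Z"
      using a b unfolding Z by (intro emeasure_bind[symmetric, OF neP kap]) auto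
    finally show "emeasure (distr M ?N (\<lambda>\<omega>. (X \<omega>, Y \<omega>))) Z = emeasure (?PX \<bind> (\<lambda>x. distr (K x) ?N (Pair x))) Z" .
  qed
qed

lemma kernel_nn:
  fixes M :: "'a measure" and X :: "'a \<Rightarrow> real^'n" and Y :: "'a \<Rightarrow> real" and K
    and f :: "(real^'n) \<times> real \<Rightarrow> ennreal"
  assumes P: "prob_space M" and mX[measurable]: "X \<in> borel_measurable M" and mY[measurable]: "Y \<in> borel_measurable M"
    and C: "is_cond_distr M X Y K" and f[measurable]: "f \<in> borel_measurable (borel \<Otimes>\<^sub>M borel)"
  shows "(\<integral>\<^sup>+\<omega>. f (X \<omega>, Y \<omega>) \<partial>M) = (\<integral>\<^sup>+x. (\<integral>\<^sup>+y. f (x, y) \<partial>K x) \<partial>distr M borel X)"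
proof -
  let ?N = "borel \<Otimes>\<^sub>M borel :: ((real^'n) \<times> real) measure"
  let ?PX = "distr M borel X"
  note Kf = Kx_facts[OF C]
  have Ks[measurable]: "K \<in> borel \<rightarrow>\<^sub>M subprob_algebra borel" by (rule Kf(1))
  have kap_b: "(\<lambda>x. distr (K x) ?N (Pair x)) \<in> borel \<rightarrow>\<^sub>M subprob_algebra ?N"
  proof (rule measurable_distr2[OF _ Ks])
    have "case_prod Pair = (\<lambda>p::(real^'n) \<times> real. p)" by (simp add: fun_eq_iff)
    then show "case_prod Pair \<in> (borel \<Otimes>\<^sub>M borel) \<rightarrow>\<^sub>M ?N" by simp
  qed
  have kap: "(\<lambda>x. distr (K x) ?N (Pair x)) \<in> ?PX \<rightarrow>\<^sub>M subprob_algebra ?N"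
    using kap_b by (simp add: measurable_cong_sets[OF sets_distr refl])
  have "(\<integral>\<^sup>+\<omega>. f (X \<omega>, Y \<omega>) \<partial>M) = (\<integral>\<^sup>+p. f p \<partial>distr M ?N (\<lambda>\<omega>. (X \<omega>, Y \<omega>)))"
    by (rule nn_integral_distr[symmetric]) measurable
  also have "\<dots> = (\<integral>\<^sup>+p. f p \<partial>(?PX \<bind> (\<lambda>x. distr (K x) ?N (Pair x))))"
    using joint_eq[OF P mX mY C] by simp
  also have "\<dots> = (\<integral>\<^sup>+x. (\<integral>\<^sup>+p. f p \<partial>distr (K x) ?N (Pair x)) \<partial>?PX)"
    by (rule nn_integral_bind[OF f kap])
  also have "\<dots> = (\<integral>\<^sup>+x. (\<integral>\<^sup>+y. f (x, y) \<partial>K x) \<partial>?PX)"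
  proof (rule nn_integral_cong)
    fix x
    have mp0: "Pair x \<in> (borel::real measure) \<rightarrow>\<^sub>M ?N" by measurable
    have mp: "Pair x \<in> K x \<rightarrow>\<^sub>M ?N" using mp0 unfolding measurable_cong_sets[OF Kf(3)[of x] refl] .
    show "(\<integral>\<^sup>+p. f p \<partial>distr (K x) ?N (Pair x)) = (\<integral>\<^sup>+y. f (x, y) \<partial>K x)"
      by (rule nn_integral_distr[OF mp]) simp
  qed
  finally show ?thesis .
qed

lemma kernel_int:
  fixes M :: "'a measure" and X :: "'a \<Rightarrow> real^'n" and Y :: "'a \<Rightarrow> real" and K
    and f :: "(real^'n) \<times> real \<Rightarrow> real"
  assumes P: "prob_space M" and mX[measurable]: "X \<in> borel_measurable M" and mY[measurable]: "Y \<in> borel_measurable M"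
    and C: "is_cond_distr M X Y K" and f[measurable]: "f \<in> borel_measurable (borel \<Otimes>\<^sub>M borel)"
    and int: "integrable M (\<lambda>\<omega>. f (X \<omega>, Y \<omega>))"
  shows "(AE x in distr M borel X. integrable (K x) (\<lambda>y. f (x, y)))
      \<and> (\<integral>\<omega>. f (X \<omega>, Y \<omega>) \<partial>M) = (\<integral>x. (\<integral>y. f (x, y) \<partial>K x) \<partial>distr M borel X)"
proof -
  let ?N = "borel \<Otimes>\<^sub>M borel :: ((real^'n) \<times> real) measure"
  let ?PX = "distr M borel X"
  let ?k = "\<lambda>x. distr (K x) ?N (Pair x)"
  note Kf = Kx_facts[OF C]
  have Ks[measurable]: "K \<in> borel \<rightarrow>\<^sub>M subprob_algebra borel" by (rule Kf(1))
  have kap_b: "?k \<in> borel \<rightarrow>\<^sub>M subprob_algebra ?N"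
  proof (rule measurable_distr2[OF _ Ks])
    have "case_prod Pair = (\<lambda>p::(real^'n) \<times> real. p)" by (simp add: fun_eq_iff)
    then show "case_prod Pair \<in> (borel \<Otimes>\<^sub>M borel) \<rightarrow>\<^sub>M ?N" by simp
  qed
  have kap: "?k \<in> ?PX \<rightarrow>\<^sub>M subprob_algebra ?N"
    using kap_b by (simp add: measurable_cong_sets[OF sets_distr refl])
  have neP: "space ?PX \<noteq> {}" by simp
  have mXY: "(\<lambda>\<omega>. (X \<omega>, Y \<omega>)) \<in> M \<rightarrow>\<^sub>M ?N" by measurable
  have "integrable (distr M ?N (\<lambda>\<omega>. (X \<omega>, Y \<omega>))) f"
    using int integrable_distr_eq[OF mXY f] by simp
  then have intB: "integrable (?PX \<bind> ?k) f" using joint_eq[OF P mX mY C] by simp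
  note R = integral_bind_kernel[OF kap neP f intB]
  have mp: "Pair x \<in> K x \<rightarrow>\<^sub>M ?N" for x
  proof -
    have mp0: "Pair x \<in> (borel::real measure) \<rightarrow>\<^sub>M ?N" by measurable
    show ?thesis using mp0 unfolding measurable_cong_sets[OF Kf(3)[of x] refl] .
  qed
  have ik: "integrable (?k x) f \<longleftrightarrow> integrable (K x) (\<lambda>y. f (x, y))" for x
    by (rule integrable_distr_eq[OF mp f])
  have ek: "integral\<^sup>L (?k x) f = (\<integral>y. f (x, y) \<partial>K x)" for x
    by (rule integral_distr[OF mp f])
  have "(\<integral>\<omega>. f (X \<omega>, Y \<omega>) \<partial>M) = integral\<^sup>L (distr M ?N (\<lambda>\<omega>. (X \<omega>, Y \<omega>))) f"
    by (rule integral_distr[OF mXY f, symmetric])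
  also have "\<dots> = integral\<^sup>L (?PX \<bind> ?k) f" using joint_eq[OF P mX mY C] by simp
  also have "\<dots> = (\<integral>x. (\<integral>y. f (x, y) \<partial>K x) \<partial>?PX)" using R ek by simp
  finally show ?thesis using R ik by simp
qed

lemma sdelta1: "(\<Sum>j\<in>(UNIV::'n::finite set). (if j = a then 1 else 0) * f j) = (f a :: real)"
proof -
  have "(\<Sum>j\<in>(UNIV::'n set). (if j = a then 1 else 0) * f j) = (\<Sum>j\<in>UNIV. if j = a then f j else 0)" by (rule sum.cong) auto
  then show ?thesis by simp
qed
lemma sdelta2: "(\<Sum>j\<in>(UNIV::'n::finite set). f j * (if j = a then 1 else 0)) = (f a :: real)"
  using sdelta1[of a f] by (simp add: mult.commute)
lemma sym_dot:
  fixes A :: "real^'n^'n"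
  assumes "transpose A = A"
  shows "(A *v x) \<bullet> y = x \<bullet> (A *v y)"
proof -
  have "(A *v x) \<bullet> y = y \<bullet> (A *v x)" by (simp add: inner_commute)
  also have "\<dots> = (y v* A) \<bullet> x" by (simp add: dot_lmul_matrix)
  also have "y v* A = transpose A *v y" by simp
  finally show ?thesis using assms by (simp add: inner_commute)
qed

lemma tr_dot:
  fixes A :: "real^'n^'m"
  shows "(A *v x) \<bullet> y = x \<bullet> (transpose A *v y)"
proof -
  have "(A *v x) \<bullet> y = y \<bullet> (A *v x)" by (simp add: inner_commute)
  also have "\<dots> = (y v* A) \<bullet> x" by (simp add: dot_lmul_matrix)
  also have "y v* A = transpose A *v y" by simp
  finally show ?thesis by (simp add: inner_commute)
qed

lemma psd_inv:
  fixes S \<Sigma> :: "real^'n^'n"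
  assumes "is_psd_sqrt S \<Sigma>"
  shows "S ** matrix_inv S = mat 1" "matrix_inv S ** S = mat 1" "transpose (matrix_inv S) = matrix_inv S"
proof -
  have tS: "transpose S = S" and pd: "pos_def_mat S" using assms by (auto simp: is_psd_sqrt_def)
  have "\<forall>x. S *v x = 0 \<longrightarrow> x = 0"
  proof (intro allI impI)
    fix x assume "S *v x = 0"
    then have "\<not> x \<bullet> (S *v x) > 0" by simp
    then show "x = 0" using pd unfolding pos_def_mat_def by blast
  qed
  then have "\<exists>B. B ** S = mat 1" using matrix_left_invertible_ker(1) by blast
  then have "invertible S" by (simp add: invertible_left_inverse)
  then have "\<exists>A'. S ** A' = mat 1 \<and> A' ** S = mat 1" by (simp add: invertible_def)
  then have inv: "S ** matrix_inv S = mat 1 \<and> matrix_inv S ** S = mat 1"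
    unfolding matrix_inv_def by (rule someI_ex)
  then show r: "S ** matrix_inv S = mat 1" and l: "matrix_inv S ** S = mat 1" by auto
  have "transpose (matrix_inv S) ** S = mat 1"
    by (metis r tS matrix_transpose_mul transpose_mat)
  then have "transpose (matrix_inv S) = transpose (matrix_inv S) ** (S ** matrix_inv S)" using r by simp
  also have "\<dots> = matrix_inv S" by (metis \<open>transpose (matrix_inv S) ** S = mat 1\<close> matrix_mul_assoc matrix_mul_lid)
  finally show "transpose (matrix_inv S) = matrix_inv S" .
qed

lemma psd_quad:
  fixes S \<Sigma> :: "real^'n^'n"
  assumes "is_psd_sqrt S \<Sigma>"
  shows "(norm (S *v v))^2 = v \<bullet> (\<Sigma> *v v)"
proof -
  have tS: "transpose S = S" and SS: "S ** S = \<Sigma>" using assms by (auto simp: is_psd_sqrt_def)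
  have "(norm (S *v v))^2 = (S *v v) \<bullet> (S *v v)" by (simp add: power2_norm_eq_inner)
  also have "\<dots> = v \<bullet> (S *v (S *v v))" by (rule sym_dot[OF tS])
  also have "\<dots> = v \<bullet> (\<Sigma> *v v)" by (simp add: matrix_vector_mul_assoc SS)
  finally show ?thesis .
qed

lemma schur_norm:
  fixes S \<Sigma> :: "real^'p^'p" and T :: "real^'q^'q" and idx :: "'q \<Rightarrow> 'p"
  assumes S: "is_psd_sqrt S \<Sigma>" and T: "is_psd_sqrt T (\<chi> k l. \<Sigma> $ idx k $ idx l)"
  shows "norm (matrix_inv T *v (\<chi> k. v $ idx k)) \<le> norm (matrix_inv S *v v)"
proof -
  define Ai where "Ai = matrix_inv S"
  define Bi where "Bi = matrix_inv T"
  define P :: "real^'q^'p" where "P = (\<chi> i k. if idx k = i then 1 else 0)"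
  define w where "w = (\<chi> k. v $ idx k)"
  define y where "y = Bi *v (Bi *v w)"
  define z where "z = P *v y"
  have tS: "transpose S = S" and SS: "S ** S = \<Sigma>" using S by (auto simp: is_psd_sqrt_def)
  have tT: "transpose T = T" and TT: "T ** T = (\<chi> k l. \<Sigma> $ idx k $ idx l)" using T by (auto simp: is_psd_sqrt_def)
  note iS = psd_inv[OF S, folded Ai_def] and iT = psd_inv[OF T, folded Bi_def]
  have wP: "w = transpose P *v v"
    by (simp add: w_def P_def vec_eq_iff matrix_vector_mult_def transpose_def eq_commute[of "idx _"] sdelta1)
  have SjP: "(\<chi> k l. \<Sigma> $ idx k $ idx l) = transpose P ** \<Sigma> ** P"
    by (simp add: P_def vec_eq_iff matrix_matrix_mult_def transpose_def eq_commute[of "idx _"] sdelta1 sdelta2)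
  have key: "2 * (z \<bullet> v) - z \<bullet> (\<Sigma> *v z) \<le> (norm (Ai *v v))^2"
  proof -
    have "0 \<le> (norm (Ai *v v - S *v z))^2" by simp
    also have "\<dots> = (norm (Ai *v v))^2 - 2 * ((Ai *v v) \<bullet> (S *v z)) + (S *v z) \<bullet> (S *v z)"
      by (simp add: power2_norm_eq_inner inner_diff_left inner_diff_right inner_commute)
    also have "(Ai *v v) \<bullet> (S *v z) = z \<bullet> v"
    proof -
      have "(Ai *v v) \<bullet> (S *v z) = (S *v (Ai *v v)) \<bullet> z" using sym_dot[OF tS] by (simp add: inner_commute)
      also have "S *v (Ai *v v) = v" by (simp add: matrix_vector_mul_assoc iS(1))
      finally show ?thesis by (simp add: inner_commute)
    qed
    also have "(S *v z) \<bullet> (S *v z) = z \<bullet> (\<Sigma> *v z)"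
      using sym_dot[OF tS] by (simp add: matrix_vector_mul_assoc SS)
    finally show ?thesis by simp
  qed
  have zv: "z \<bullet> v = (norm (Bi *v w))^2"
  proof -
    have "z \<bullet> v = y \<bullet> w" unfolding z_def wP by (rule tr_dot)
    also have "\<dots> = (Bi *v w) \<bullet> (Bi *v w)" unfolding y_def using sym_dot[OF iT(3)] by simp
    finally show ?thesis by (simp add: power2_norm_eq_inner)
  qed
  have zSz: "z \<bullet> (\<Sigma> *v z) = (norm (Bi *v w))^2"
  proof -
    have "z \<bullet> (\<Sigma> *v z) = y \<bullet> (transpose P *v (\<Sigma> *v (P *v y)))" unfolding z_def by (rule tr_dot)
    also have "\<dots> = y \<bullet> ((T ** T) *v y)" unfolding TT SjP by (simp add: matrix_vector_mul_assoc matrix_mul_assoc)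
    also have "\<dots> = (T *v y) \<bullet> (T *v y)" using sym_dot[OF tT] by (simp add: matrix_vector_mul_assoc)
    also have "T *v y = Bi *v w" unfolding y_def by (metis matrix_vector_mul_assoc iT(1) matrix_vector_mul_lid)
    finally show ?thesis by (simp add: power2_norm_eq_inner)
  qed
  have "(norm (Bi *v w))^2 \<le> (norm (Ai *v v))^2" using key zv zSz by linarith
  then have "norm (Bi *v w) \<le> norm (Ai *v v)" by (rule power2_le_imp_le) simp_all
  then show ?thesis by (simp add: Ai_def Bi_def w_def)
qed

lemma core_x:
  fixes K :: "real^'n \<Rightarrow> real measure" and x bstar tstar \<beta> :: "real^'n"
  assumes C: "is_cond_distr M X Y K"
    and F1: "F_eps K bstar x C1_differentiable_on UNIV"
    and F2: "\<forall>t. \<bar>F_eps K bstar x t - F_eps K bstar x 0\<bar> \<le> fu * \<bar>t\<bar>"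
    and F3: "(\<integral>\<^sup>+ y. ennreal ((min (y - x \<bullet> bstar) 0)\<^sup>2) \<partial>K x) \<le> ennreal (se\<^sup>2)"
    and Q1: "cond_quantile K x \<tau> = x \<bullet> bstar"
    and Q2: "(1 / \<tau>) * (LINT u:{0..\<tau>}|lborel. cond_quantile K x u) = x \<bullet> tstar"
    and tau: "0 < \<tau>" "\<tau> < 1"
  shows "integrable (K x) (\<lambda>y. efun \<tau> tstar y x \<beta>)
       \<and> \<bar>\<integral>y. efun \<tau> tstar y x \<beta> \<partial>K x\<bar> \<le> fu * (x \<bullet> (\<beta> - bstar))^2 / 2"
proof -
  note Kf = Kx_facts[OF C]
  have cF: "continuous_on UNIV (F_eps K bstar x)" using F1 by (rule C1_differentiable_imp_continuous_on)
  have Geq: "measure (K x) {..s} = F_eps K bstar x (s - x \<bullet> bstar)" for s by (simp add: F_eps_def)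
  have contG: "isCont (\<lambda>s. measure (K x) {..s}) s" for s
  proof -
    have "continuous_on UNIV (\<lambda>s. F_eps K bstar x (s - x \<bullet> bstar))"
      by (rule continuous_on_compose2[OF cF]) (auto intro!: continuous_intros)
    then show ?thesis unfolding Geq by (simp add: continuous_on_eq_continuous_at)
  qed
  have lip: "\<bar>measure (K x) {..s} - measure (K x) {..x \<bullet> bstar}\<bar> \<le> fu * \<bar>s - x \<bullet> bstar\<bar>" for s
    using F2[rule_format, of "s - x \<bullet> bstar"] unfolding Geq by simp
  have mom: "(\<integral>\<^sup>+ y. ennreal ((min (y - x \<bullet> bstar) 0)^2) \<partial>K x) < \<infinity>"
    using F3 by (rule le_less_trans) simp
  have q: "Inf {t. \<tau> \<le> measure (K x) {..t}} = x \<bullet> bstar" using Q1 by (simp add: cond_quantile_def)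
  have es: "(1/\<tau>) * (LINT u:{0..\<tau>}|lborel. Inf {t. u \<le> measure (K x) {..t}}) = x \<bullet> tstar"
    using Q2 by (simp add: cond_quantile_def)
  note R = core1d[OF Kf(2) Kf(3) contG lip q es mom tau, of "x \<bullet> \<beta>"]
  have ef: "efun \<tau> tstar y x \<beta> = (y - x \<bullet> \<beta>) * (if y \<le> x \<bullet> \<beta> then 1 else 0) + \<tau> * (x \<bullet> \<beta>) - \<tau> * (x \<bullet> tstar)" for y
    by (simp add: efun_def Zfun_def)
  have sq: "(x \<bullet> \<beta> - x \<bullet> bstar)^2 = (x \<bullet> (\<beta> - bstar))^2" by (simp add: inner_diff_right)
  show ?thesis unfolding ef using R sq by simp
qed

lemma dotb:
  fixes x v :: "real^'n"
  assumes "\<forall>i. \<bar>x $ i\<bar> \<le> b"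
  shows "\<bar>x \<bullet> v\<bar> \<le> b * (\<Sum>i\<in>UNIV. \<bar>v $ i\<bar>)"
proof -
  have "\<bar>x \<bullet> v\<bar> = \<bar>\<Sum>i\<in>UNIV. x $ i * v $ i\<bar>" by (simp add: inner_vec_def)
  also have "\<dots> \<le> (\<Sum>i\<in>UNIV. \<bar>x $ i * v $ i\<bar>)" by (rule sum_abs)
  also have "\<dots> \<le> (\<Sum>i\<in>UNIV. b * \<bar>v $ i\<bar>)"
    by (rule sum_mono) (simp add: abs_mult assms mult_right_mono)
  finally show ?thesis by (simp add: sum_distrib_left)
qed

lemma efun_bound:
  "\<bar>efun \<tau> tstar y x \<beta>\<bar> \<le> \<bar>min (y - x \<bullet> bstar) 0\<bar> + \<bar>x \<bullet> (\<beta> - bstar)\<bar> + \<tau> * \<bar>x \<bullet> \<beta>\<bar> + \<tau> * \<bar>x \<bullet> tstar\<bar>"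
  if "0 \<le> \<tau>"
proof -
  have a: "\<bar>(y - x \<bullet> \<beta>) * (if y \<le> x \<bullet> \<beta> then 1 else 0)\<bar> \<le> \<bar>min (y - x \<bullet> bstar) 0\<bar> + \<bar>x \<bullet> (\<beta> - bstar)\<bar>"
    by (auto simp: inner_diff_right)
  have "\<bar>efun \<tau> tstar y x \<beta>\<bar> \<le> \<bar>(y - x \<bullet> \<beta>) * (if y \<le> x \<bullet> \<beta> then 1 else 0)\<bar> + \<bar>\<tau> * (x \<bullet> \<beta>)\<bar> + \<bar>\<tau> * (x \<bullet> tstar)\<bar>"
    unfolding efun_def Zfun_def by linarith
  also have "\<bar>\<tau> * (x \<bullet> \<beta>)\<bar> = \<tau> * \<bar>x \<bullet> \<beta>\<bar>" using that by (simp add: abs_mult)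
  also have "\<bar>\<tau> * (x \<bullet> tstar)\<bar> = \<tau> * \<bar>x \<bullet> tstar\<bar>" using that by (simp add: abs_mult)
  finally show ?thesis using a by linarith
qed

lemma exp_bound:
  fixes M :: "'a measure" and X :: "'a \<Rightarrow> real^'n" and Y :: "'a \<Rightarrow> real" and K
    and bstar tstar \<beta> :: "real^'n" and g :: "real^'n \<Rightarrow> real"
  assumes P: "prob_space M" and mX[measurable]: "X \<in> borel_measurable M" and mY[measurable]: "Y \<in> borel_measurable M"
    and C: "is_cond_distr M X Y K" and QES: "model_QES M X K \<tau> bstar tstar"
    and A: "conditionA M X K bstar fu se be" and tau: "0 < \<tau>" "\<tau> < 1"
    and Xb: "AE \<omega> in M. \<forall>i. \<bar>X \<omega> $ i\<bar> \<le> bX"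
    and g[measurable]: "g \<in> borel_measurable borel" and gb: "AE \<omega> in M. \<bar>g (X \<omega>)\<bar> \<le> Bg"
  shows "integrable M (\<lambda>\<omega>. efun \<tau> tstar (Y \<omega>) (X \<omega>) \<beta> * g (X \<omega>))
    \<and> \<bar>\<integral>\<omega>. efun \<tau> tstar (Y \<omega>) (X \<omega>) \<beta> * g (X \<omega>) \<partial>M\<bar>
        \<le> (\<integral>\<omega>. fu * (X \<omega> \<bullet> (\<beta> - bstar))^2 * \<bar>g (X \<omega>)\<bar> / 2 \<partial>M)"
proof -
  interpret prob_space M by fact
  let ?PX = "distr M borel X"
  interpret PX: prob_space ?PX by (rule prob_space_distr) simp
  have fu0: "0 < fu" using A by (simp add: conditionA_def)
  have good: "AE x in ?PX. integrable (K x) (\<lambda>y. efun \<tau> tstar y x \<beta>)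
       \<and> \<bar>\<integral>y. efun \<tau> tstar y x \<beta> \<partial>K x\<bar> \<le> fu * (x \<bullet> (\<beta> - bstar))^2 / 2"
  proof -
    have a1: "AE x in ?PX. F_eps K bstar x C1_differentiable_on UNIV \<and>
        (\<forall>t. \<bar>F_eps K bstar x t - F_eps K bstar x 0\<bar> \<le> fu * \<bar>t\<bar>) \<and>
        (\<integral>\<^sup>+ y. ennreal ((min (y - x \<bullet> bstar) 0)\<^sup>2) \<partial>K x) \<le> ennreal (se\<^sup>2)"
      using A unfolding conditionA_def by (auto elim!: eventually_mono)
    have a2: "AE x in ?PX. cond_quantile K x \<tau> = x \<bullet> bstar \<and>
        (1 / \<tau>) * (LINT u:{0..\<tau>}|lborel. cond_quantile K x u) = x \<bullet> tstar"
      using QES unfolding model_QES_def by simp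
    from a1 a2 show ?thesis
      by eventually_elim (intro core_x[where se=se, OF C _ _ _ _ _ tau]; simp)
  qed
  have mom: "AE x in ?PX. (\<integral>\<^sup>+ y. ennreal ((min (y - x \<bullet> bstar) 0)^2) \<partial>K x) \<le> ennreal (se^2)"
    using A unfolding conditionA_def by (auto elim!: eventually_mono)
  have msq: "(\<lambda>p::(real^'n)\<times>real. ennreal ((min (snd p - fst p \<bullet> bstar) 0)^2)) \<in> borel_measurable (borel \<Otimes>\<^sub>M borel)"
    by measurable
  have "(\<integral>\<^sup>+\<omega>. ennreal ((min (Y \<omega> - X \<omega> \<bullet> bstar) 0)^2) \<partial>M)
      = (\<integral>\<^sup>+x. (\<integral>\<^sup>+y. ennreal ((min (y - x \<bullet> bstar) 0)^2) \<partial>K x) \<partial>?PX)"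
    using kernel_nn[OF P mX mY C msq] by simp
  also have "\<dots> \<le> (\<integral>\<^sup>+x. ennreal (se^2) \<partial>?PX)" by (rule nn_integral_mono_AE) (rule mom)
  also have "\<dots> = ennreal (se^2)"
  proof -
    have "emeasure ?PX UNIV = 1" using PX.emeasure_space_1 by simp
    then show ?thesis by simp
  qed
  finally have fin: "(\<integral>\<^sup>+\<omega>. ennreal ((min (Y \<omega> - X \<omega> \<bullet> bstar) 0)^2) \<partial>M) < \<infinity>"
    using le_less_trans by fastforce
  have isq: "integrable M (\<lambda>\<omega>. (min (Y \<omega> - X \<omega> \<bullet> bstar) 0)^2)"
    by (rule integrableI_bounded) (use fin in simp_all)
  define cb where "cb v = bX * (\<Sum>i\<in>UNIV. \<bar>v $ i\<bar>)" for v :: "real^'n"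
  define D where "D \<omega> = \<bar>Bg\<bar> * (1 + (min (Y \<omega> - X \<omega> \<bullet> bstar) 0)^2 + cb (\<beta> - bstar) + \<tau> * cb \<beta> + \<tau> * cb tstar)" for \<omega>
  have iD: "integrable M D" unfolding D_def using isq by simp
  have ief: "integrable M (\<lambda>\<omega>. efun \<tau> tstar (Y \<omega>) (X \<omega>) \<beta> * g (X \<omega>))"
  proof (rule Bochner_Integration.integrable_bound[OF iD])
    show "(\<lambda>\<omega>. efun \<tau> tstar (Y \<omega>) (X \<omega>) \<beta> * g (X \<omega>)) \<in> borel_measurable M"
      unfolding efun_def Zfun_def by measurable
    show "AE \<omega> in M. norm (efun \<tau> tstar (Y \<omega>) (X \<omega>) \<beta> * g (X \<omega>)) \<le> norm (D \<omega>)"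
      using Xb gb
    proof eventually_elim
      case (elim \<omega>)
      have e: "\<bar>efun \<tau> tstar (Y \<omega>) (X \<omega>) \<beta>\<bar> \<le> \<bar>min (Y \<omega> - X \<omega> \<bullet> bstar) 0\<bar> + cb (\<beta> - bstar) + \<tau> * cb \<beta> + \<tau> * cb tstar"
      proof -
        have "\<bar>efun \<tau> tstar (Y \<omega>) (X \<omega>) \<beta>\<bar> \<le> \<bar>min (Y \<omega> - X \<omega> \<bullet> bstar) 0\<bar> + \<bar>X \<omega> \<bullet> (\<beta> - bstar)\<bar> + \<tau> * \<bar>X \<omega> \<bullet> \<beta>\<bar> + \<tau> * \<bar>X \<omega> \<bullet> tstar\<bar>"
          by (rule efun_bound) (use tau in simp)
        moreover have "\<bar>X \<omega> \<bullet> v\<bar> \<le> cb v" for v unfolding cb_def by (rule dotb) (use elim in simp)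
        ultimately show ?thesis using tau
          by (smt (verit, best) mult_left_mono)
      qed
      have e0: "0 \<le> \<bar>min (Y \<omega> - X \<omega> \<bullet> bstar) 0\<bar> + cb (\<beta> - bstar) + \<tau> * cb \<beta> + \<tau> * cb tstar"
        using e by linarith
      have "norm (efun \<tau> tstar (Y \<omega>) (X \<omega>) \<beta> * g (X \<omega>)) = \<bar>efun \<tau> tstar (Y \<omega>) (X \<omega>) \<beta>\<bar> * \<bar>g (X \<omega>)\<bar>"
        by (simp add: abs_mult)
      also have "\<dots> \<le> (\<bar>min (Y \<omega> - X \<omega> \<bullet> bstar) 0\<bar> + cb (\<beta> - bstar) + \<tau> * cb \<beta> + \<tau> * cb tstar) * \<bar>Bg\<bar>"
        using elim(2) e e0 by (intro mult_mono) auto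
      also have "\<dots> \<le> D \<omega>"
        using abs_le_1_sq[of "min (Y \<omega> - X \<omega> \<bullet> bstar) 0"] unfolding D_def
        by (simp add: mult.commute mult_left_mono)
      also have "\<dots> \<le> norm (D \<omega>)" by simp
      finally show ?case .
    qed
  qed
  define f where "f p = efun \<tau> tstar (snd p) (fst p) \<beta> * g (fst p)" for p :: "(real^'n) \<times> real"
  have mf[measurable]: "f \<in> borel_measurable (borel \<Otimes>\<^sub>M borel)" unfolding f_def efun_def Zfun_def by measurable
  have intf: "integrable M (\<lambda>\<omega>. f (X \<omega>, Y \<omega>))" using ief by (simp add: f_def)
  note KI = kernel_int[OF P mX mY C mf intf]
  define h where "h x = (\<integral>y. efun \<tau> tstar y x \<beta> \<partial>K x)" for x
  define bd where "bd x = fu * (x \<bullet> (\<beta> - bstar))^2 * \<bar>g x\<bar> / 2" for x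
  have mbd[measurable]: "bd \<in> borel_measurable borel" unfolding bd_def by measurable
  have e1: "(\<integral>\<omega>. efun \<tau> tstar (Y \<omega>) (X \<omega>) \<beta> * g (X \<omega>) \<partial>M) = (\<integral>x. h x * g x \<partial>?PX)"
    using KI by (simp add: f_def h_def)
  have ibd: "integrable ?PX bd"
  proof -
    have "integrable M (\<lambda>\<omega>. bd (X \<omega>))"
    proof (rule integrable_const_bound[where B = "fu * (cb (\<beta> - bstar))^2 * \<bar>Bg\<bar> / 2"])
      show "(\<lambda>\<omega>. bd (X \<omega>)) \<in> borel_measurable M" by measurable
      show "AE \<omega> in M. norm (bd (X \<omega>)) \<le> fu * (cb (\<beta> - bstar))^2 * \<bar>Bg\<bar> / 2"
        using Xb gb
      proof eventually_elim
        case (elim \<omega>)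
        have ab: "\<bar>X \<omega> \<bullet> (\<beta> - bstar)\<bar> \<le> cb (\<beta> - bstar)" unfolding cb_def by (rule dotb) (use elim in simp)
        have sq: "(X \<omega> \<bullet> (\<beta> - bstar))^2 \<le> (cb (\<beta> - bstar))^2"
          using power_mono[OF ab abs_ge_zero, of 2] by simp
        have "norm (bd (X \<omega>)) = fu * (X \<omega> \<bullet> (\<beta> - bstar))^2 * \<bar>g (X \<omega>)\<bar> / 2"
          unfolding bd_def using fu0 by (simp add: abs_mult)
        also have "\<dots> \<le> fu * (cb (\<beta> - bstar))^2 * \<bar>Bg\<bar> / 2"
          using sq elim(2) fu0 by (intro divide_right_mono mult_mono mult_left_mono) auto
        finally show ?case .
      qed
    qed
    then show ?thesis by (subst integrable_distr_eq) simp_all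
  qed
  have "\<bar>\<integral>x. h x * g x \<partial>?PX\<bar> \<le> (\<integral>x. \<bar>h x * g x\<bar> \<partial>?PX)" by (rule integral_abs_bound)
  also have "\<dots> \<le> (\<integral>x. bd x \<partial>?PX)"
  proof (rule integral_mono_AE'[OF ibd])
    show "AE x in ?PX. \<bar>h x * g x\<bar> \<le> bd x"
      using good
    proof eventually_elim
      case (elim x)
      then have "\<bar>h x\<bar> \<le> fu * (x \<bullet> (\<beta> - bstar))^2 / 2" by (simp add: h_def)
      then have "\<bar>h x\<bar> * \<bar>g x\<bar> \<le> fu * (x \<bullet> (\<beta> - bstar))^2 / 2 * \<bar>g x\<bar>" by (rule mult_right_mono) simp
      then show ?case by (simp add: bd_def abs_mult)
    qed
    show "AE x in ?PX. 0 \<le> bd x" using fu0 by (simp add: bd_def)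
  qed
  also have "\<dots> = (\<integral>\<omega>. bd (X \<omega>) \<partial>M)" by (rule integral_distr) simp_all
  finally show ?thesis using ief e1 by (simp add: bd_def)
qed

lemma vec_nth_meas[measurable (raw)]:
  fixes f :: "'a \<Rightarrow> real^'n"
  assumes "f \<in> borel_measurable M"
  shows "(\<lambda>x. f x $ i) \<in> borel_measurable M"
proof -
  have "(\<lambda>x::real^'n. x $ i) \<in> borel_measurable borel"
    by (intro borel_measurable_continuous_onI continuous_on_component continuous_on_id)
  then show ?thesis using assms by (rule measurable_compose[rotated])
qed

lemma young3: "0 \<le> a \<Longrightarrow> 0 \<le> c \<Longrightarrow> a^2 * c \<le> (2/3) * a^3 + (1/3) * (c::real)^3"
proof -
  assume a: "0 \<le> a" and c: "0 \<le> c"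
  have "(2/3) * a^3 + (1/3) * c^3 - a^2 * c = (1/3) * ((a - c)^2 * (2 * a + c))"
    by (simp add: algebra_simps power2_eq_square power3_eq_cube)
  moreover have "0 \<le> (a - c)^2 * (2 * a + c)" using a c by simp
  ultimately show ?thesis by linarith
qed

lemma powr32: "0 \<le> q \<Longrightarrow> q powr (3/2) = (sqrt q)^3"
proof -
  assume q: "0 \<le> q"
  show ?thesis
  proof (cases "q = 0")
    case False
    then have qp: "0 < q" using q by simp
    have "(sqrt q)^3 = (q powr (1/2))^3" using q by (simp add: powr_half_sqrt)
    also have "\<dots> = (q powr (1/2)) powr 3" using qp by (simp add: powr_realpow)
    also have "\<dots> = q powr (3/2)" by (simp add: powr_powr)
    finally show ?thesis by simp
  qed simp
qed

lemma quad_int: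
  fixes M :: "'a measure" and X :: "'a \<Rightarrow> real^'n"
  assumes P: "prob_space M" and mX[measurable]: "X \<in> borel_measurable M"
    and Xb: "AE \<omega> in M. \<forall>i. \<bar>X \<omega> $ i\<bar> \<le> bX"
  shows "integrable M (\<lambda>\<omega>. (X \<omega> \<bullet> v)^2) \<and> (\<integral>\<omega>. (X \<omega> \<bullet> v)^2 \<partial>M) = v \<bullet> (second_moment M X *v v)"
proof -
  interpret prob_space M by fact
  have iXX: "integrable M (\<lambda>\<omega>. X \<omega> $ i * X \<omega> $ k)" for i k
  proof (rule integrable_const_bound[where B="bX * bX"])
    show "AE \<omega> in M. norm (X \<omega> $ i * X \<omega> $ k) \<le> bX * bX"
      using Xb by eventually_elim (auto simp: abs_mult intro!: mult_mono order_trans[OF abs_ge_zero])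
  qed simp
  have exp: "(X \<omega> \<bullet> v)^2 = (\<Sum>i\<in>UNIV. \<Sum>k\<in>UNIV. (X \<omega> $ i * X \<omega> $ k) * (v $ i * v $ k))" for \<omega>
    by (simp add: inner_vec_def power2_eq_square sum_product algebra_simps)
  have int: "integrable M (\<lambda>\<omega>. (X \<omega> \<bullet> v)^2)" unfolding exp using iXX by simp
  have "(\<integral>\<omega>. (X \<omega> \<bullet> v)^2 \<partial>M) = (\<Sum>i\<in>UNIV. \<Sum>k\<in>UNIV. (\<integral>\<omega>. X \<omega> $ i * X \<omega> $ k \<partial>M) * (v $ i * v $ k))"
    unfolding exp using iXX by (simp add: Bochner_Integration.integral_sum)
  also have "\<dots> = v \<bullet> (second_moment M X *v v)"
    by (simp add: second_moment_def inner_vec_def matrix_vector_mult_def sum_distrib_left algebra_simps)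
  finally show ?thesis using int by simp
qed

lemma m3_facts:
  fixes M :: "'a measure" and X :: "'a \<Rightarrow> real^'n" and Sh :: "real^'n^'n"
  assumes P: "prob_space M" and mX[measurable]: "X \<in> borel_measurable M"
    and Xb: "AE \<omega> in M. \<forall>i. \<bar>X \<omega> $ i\<bar> \<le> bX"
    and S: "is_psd_sqrt Sh (second_moment M X)"
  shows "0 \<le> m3_const M X"
    and "(\<integral>\<omega>. \<bar>X \<omega> \<bullet> v\<bar>^3 \<partial>M) \<le> m3_const M X * (sqrt (v \<bullet> (second_moment M X *v v)))^3"
proof -
  interpret prob_space M by fact
  let ?S = "second_moment M X"
  let ?Ai = "matrix_inv Sh"
  define r where "r u = (\<integral>\<omega>. \<bar>X \<omega> \<bullet> u\<bar> ^ 3 \<partial>M) / ((\<integral>\<omega>. (X \<omega> \<bullet> u)\<^sup>2 \<partial>M) powr (3/2))" for u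
  have m3: "m3_const M X = Sup (r ` {u. norm u = 1})"
    unfolding m3_const_def r_def by (rule arg_cong[where f=Sup]) auto
  obtain Kc where Kc: "Kc > 0" "\<And>z. norm (?Ai *v z) \<le> norm z * Kc"
    using bounded_linear.pos_bounded[OF matrix_vector_mul_bounded_linear[of ?Ai]] by blast
  note iS = psd_inv[OF S]
  have q: "(\<integral>\<omega>. (X \<omega> \<bullet> v)^2 \<partial>M) = (norm (Sh *v v))^2" for v
    using quad_int[OF P mX Xb, of v] psd_quad[OF S, of v] by simp
  have lowb: "norm v \<le> norm (Sh *v v) * Kc" for v
  proof -
    have "v = ?Ai *v (Sh *v v)" by (simp add: matrix_vector_mul_assoc iS(2))
    then show ?thesis using Kc(2)[of "Sh *v v"] by metis
  qed
  define B where "B = \<bar>bX\<bar> * real CARD('n)"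
  have i3: "integrable M (\<lambda>\<omega>. \<bar>X \<omega> \<bullet> v\<bar> ^ 3)" for v
  proof (rule integrable_const_bound[where B="(\<bar>bX\<bar> * (\<Sum>i\<in>UNIV. \<bar>v $ i\<bar>))^3"])
    show "AE \<omega> in M. norm (\<bar>X \<omega> \<bullet> v\<bar> ^ 3) \<le> (\<bar>bX\<bar> * (\<Sum>i\<in>UNIV. \<bar>v $ i\<bar>))^3"
      using Xb
    proof eventually_elim
      case (elim \<omega>)
      have "\<bar>X \<omega> \<bullet> v\<bar> \<le> \<bar>bX\<bar> * (\<Sum>i\<in>UNIV. \<bar>v $ i\<bar>)" by (rule dotb) (meson elim abs_ge_self order_trans)
      then show ?case by (simp add: power_mono)
    qed
  qed simp
  have r0: "0 \<le> r u" for u unfolding r_def by (intro divide_nonneg_nonneg integral_nonneg_AE) auto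
  have rb: "r u \<le> B^3 / ((1 / Kc)^2) powr (3/2)" if u: "norm u = 1" for u
  proof -
    have "(\<integral>\<omega>. \<bar>X \<omega> \<bullet> u\<bar> ^ 3 \<partial>M) \<le> (\<integral>\<omega>. B^3 \<partial>M)"
    proof (rule integral_mono_AE[OF i3])
      show "integrable M (\<lambda>\<omega>. B^3)" by simp
      show "AE \<omega> in M. \<bar>X \<omega> \<bullet> u\<bar> ^ 3 \<le> B^3"
        using Xb
      proof eventually_elim
        case (elim \<omega>)
        have "\<bar>X \<omega> \<bullet> u\<bar> \<le> \<bar>bX\<bar> * (\<Sum>i\<in>UNIV. \<bar>u $ i\<bar>)" by (rule dotb) (meson elim abs_ge_self order_trans)
        also have "(\<Sum>i\<in>UNIV. \<bar>u $ i\<bar>) \<le> (\<Sum>i\<in>(UNIV::'n set). 1)"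
          by (rule sum_mono) (metis component_le_norm_cart u)
        then have "\<bar>bX\<bar> * (\<Sum>i\<in>UNIV. \<bar>u $ i\<bar>) \<le> B" unfolding B_def by (simp add: mult_left_mono)
        finally show ?case by (simp add: power_mono)
      qed
    qed
    then have n: "(\<integral>\<omega>. \<bar>X \<omega> \<bullet> u\<bar> ^ 3 \<partial>M) \<le> B^3" by (simp add: prob_space)
    have "1 / Kc \<le> norm (Sh *v u)" using lowb[of u] u Kc(1) by (simp add: field_simps)
    then have "(1 / Kc)^2 \<le> (\<integral>\<omega>. (X \<omega> \<bullet> u)^2 \<partial>M)" unfolding q using Kc(1) by (simp add: power_mono)
    then have d: "((1 / Kc)^2) powr (3/2) \<le> (\<integral>\<omega>. (X \<omega> \<bullet> u)^2 \<partial>M) powr (3/2)"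
      by (intro powr_mono2) simp_all
    have dp: "0 < ((1 / Kc)^2) powr (3/2)" using Kc(1) by simp
    show ?thesis unfolding r_def by (rule frac_le) (use n d dp in \<open>auto simp: B_def\<close>)
  qed
  have bdd: "bdd_above (r ` {u. norm u = 1})" using rb by (auto intro!: bdd_aboveI2)
  have le: "r u \<le> m3_const M X" if "norm u = 1" for u unfolding m3 using bdd that by (auto intro!: cSup_upper)
  show m0: "0 \<le> m3_const M X" using le[of "axis undefined 1"] r0[of "axis undefined 1"] by simp
  show "(\<integral>\<omega>. \<bar>X \<omega> \<bullet> v\<bar>^3 \<partial>M) \<le> m3_const M X * (sqrt (v \<bullet> (?S *v v)))^3"
  proof (cases "v = 0")
    case True then show ?thesis by simp
  next
    case False
    define nv where "nv = norm v"
    have nv: "0 < nv" using False by (simp add: nv_def)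
    define u where "u = (1 / nv) *\<^sub>R v"
    have nu: "norm u = 1" using nv by (simp add: u_def nv_def)
    have Qv: "v \<bullet> (?S *v v) = (norm (Sh *v v))^2" using psd_quad[OF S] by simp
    have Qp: "0 < norm (Sh *v v)" using lowb[of v] nv Kc(1) unfolding nv_def
      by (metis mult_eq_0_iff norm_eq_zero not_less norm_not_less_zero order_le_less_trans zero_less_norm_iff False order.strict_iff_not)
    have c3: "(\<integral>\<omega>. \<bar>X \<omega> \<bullet> u\<bar>^3 \<partial>M) = (\<integral>\<omega>. \<bar>X \<omega> \<bullet> v\<bar>^3 \<partial>M) / nv^3"
      using nv by (simp add: u_def abs_mult power_mult_distrib field_simps)
    have c2: "(\<integral>\<omega>. (X \<omega> \<bullet> u)^2 \<partial>M) = (norm (Sh *v v) / nv)^2"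
      unfolding q using nv by (simp add: u_def matrix_vector_mult_scaleR power_divide)
    have p: "(\<integral>\<omega>. (X \<omega> \<bullet> u)^2 \<partial>M) powr (3/2) = (norm (Sh *v v))^3 / nv^3"
    proof -
      have "sqrt ((norm (Sh *v v) / nv)^2) = norm (Sh *v v) / nv" using nv by simp
      then show ?thesis unfolding c2 using nv by (simp add: powr32 power_divide del: real_sqrt_abs)
    qed
    have "r u = (\<integral>\<omega>. \<bar>X \<omega> \<bullet> v\<bar>^3 \<partial>M) / (norm (Sh *v v))^3"
      unfolding r_def c3 p using nv Qp by (simp add: field_simps)
    then have "(\<integral>\<omega>. \<bar>X \<omega> \<bullet> v\<bar>^3 \<partial>M) = r u * (norm (Sh *v v))^3" using Qp by (simp add: field_simps)
    also have "\<dots> \<le> m3_const M X * (norm (Sh *v v))^3" using le[OF nu] Qp by (simp add: mult_right_mono)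
    finally show ?thesis unfolding Qv by simp
  qed
qed

lemma sh_zero:
  assumes S: "is_psd_sqrt Sh \<Sigma>" and "Sh *v d = 0"
  shows "d = 0"
proof -
  have "d = matrix_inv Sh *v (Sh *v d)" by (simp add: matrix_vector_mul_assoc psd_inv(2)[OF S])
  then show ?thesis using assms(2) by simp
qed

lemma m3_cross:
  fixes M :: "'a measure" and X :: "'a \<Rightarrow> real^'n" and Sh :: "real^'n^'n"
  assumes P: "prob_space M" and mX[measurable]: "X \<in> borel_measurable M"
    and Xb: "AE \<omega> in M. \<forall>i. \<bar>X \<omega> $ i\<bar> \<le> bX"
    and S: "is_psd_sqrt Sh (second_moment M X)"
  shows "(\<integral>\<omega>. (X \<omega> \<bullet> d)^2 * \<bar>X \<omega> \<bullet> w\<bar> \<partial>M)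
       \<le> m3_const M X * (d \<bullet> (second_moment M X *v d)) * sqrt (w \<bullet> (second_moment M X *v w))"
proof -
  interpret prob_space M by fact
  let ?S = "second_moment M X"
  define cb where "cb v = \<bar>bX\<bar> * (\<Sum>i\<in>UNIV. \<bar>v $ i\<bar>)" for v :: "real^'n"
  have dot: "AE \<omega> in M. \<forall>v. \<bar>X \<omega> \<bullet> v\<bar> \<le> cb v"
    using Xb by eventually_elim (auto simp: cb_def intro!: dotb elim: order_trans[OF _ abs_ge_self])
  have ib: "integrable M (\<lambda>\<omega>. (X \<omega> \<bullet> a)^2 * \<bar>X \<omega> \<bullet> b\<bar>)" for a b
  proof (rule integrable_const_bound[where B="(cb a)^2 * cb b"])
    show "AE \<omega> in M. norm ((X \<omega> \<bullet> a)^2 * \<bar>X \<omega> \<bullet> b\<bar>) \<le> (cb a)^2 * cb b"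
      using dot
    proof eventually_elim
      case (elim \<omega>)
      have "(X \<omega> \<bullet> a)^2 \<le> (cb a)^2" using power_mono[OF elim[rule_format, of a] abs_ge_zero, of 2] by simp
      then show ?case using elim[rule_format, of b] by (simp add: abs_mult mult_mono)
    qed
  qed simp
  have i3: "integrable M (\<lambda>\<omega>. \<bar>X \<omega> \<bullet> a\<bar>^3)" for a
  proof (rule integrable_const_bound[where B="(cb a)^3"])
    show "AE \<omega> in M. norm (\<bar>X \<omega> \<bullet> a\<bar>^3) \<le> (cb a)^3"
      using dot by eventually_elim (simp add: power_mono)
  qed simp
  note mf = m3_facts[OF P mX Xb S]
  define sa where "sa = sqrt (d \<bullet> (?S *v d))"
  define sc where "sc = sqrt (w \<bullet> (?S *v w))"
  have qd: "d \<bullet> (?S *v d) = (norm (Sh *v d))^2" and qw: "w \<bullet> (?S *v w) = (norm (Sh *v w))^2"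
    using psd_quad[OF S] by simp_all
  have sa_eq: "sa = norm (Sh *v d)" and sc_eq: "sc = norm (Sh *v w)" unfolding sa_def sc_def qd qw by simp_all
  show ?thesis
  proof (cases "sa = 0 \<or> sc = 0")
    case True
    then have "d = 0 \<or> w = 0" using sh_zero[OF S] unfolding sa_eq sc_eq by auto
    then show ?thesis by auto
  next
    case False
    then have sa: "0 < sa" and sc: "0 < sc" unfolding sa_eq sc_eq by auto
    have pw: "(X \<omega> \<bullet> d)^2 * \<bar>X \<omega> \<bullet> w\<bar> \<le> (2/3) * (sc / sa) * \<bar>X \<omega> \<bullet> d\<bar>^3 + (1/3) * (sa^2 / sc^2) * \<bar>X \<omega> \<bullet> w\<bar>^3" for \<omega>
    proof -
      define a where "a = \<bar>X \<omega> \<bullet> d\<bar> / sa"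
      define c where "c = \<bar>X \<omega> \<bullet> w\<bar> / sc"
      have y: "a^2 * c \<le> (2/3) * a^3 + (1/3) * c^3" using sa sc by (intro young3) (simp_all add: a_def c_def)
      have "sa^2 * sc * (a^2 * c) \<le> sa^2 * sc * ((2/3) * a^3 + (1/3) * c^3)"
        using y sa sc by (intro mult_left_mono) simp_all
      moreover have "sa^2 * sc * (a^2 * c) = (X \<omega> \<bullet> d)^2 * \<bar>X \<omega> \<bullet> w\<bar>"
        using sa sc by (simp add: a_def c_def power_divide power2_abs field_simps)
      moreover have "sa^2 * sc * ((2/3) * a^3 + (1/3) * c^3) = (2/3) * (sc / sa) * \<bar>X \<omega> \<bullet> d\<bar>^3 + (1/3) * (sa^2 / sc^2) * \<bar>X \<omega> \<bullet> w\<bar>^3"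
        using sa sc by (simp add: a_def c_def power_divide field_simps power3_eq_cube power2_eq_square)
      ultimately show ?thesis by simp
    qed
    have "(\<integral>\<omega>. (X \<omega> \<bullet> d)^2 * \<bar>X \<omega> \<bullet> w\<bar> \<partial>M)
        \<le> (\<integral>\<omega>. (2/3) * (sc / sa) * \<bar>X \<omega> \<bullet> d\<bar>^3 + (1/3) * (sa^2 / sc^2) * \<bar>X \<omega> \<bullet> w\<bar>^3 \<partial>M)"
      by (rule integral_mono[OF ib]) (use i3 pw in auto)
    also have "\<dots> = (2/3) * (sc / sa) * (\<integral>\<omega>. \<bar>X \<omega> \<bullet> d\<bar>^3 \<partial>M) + (1/3) * (sa^2 / sc^2) * (\<integral>\<omega>. \<bar>X \<omega> \<bullet> w\<bar>^3 \<partial>M)"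
      using i3[of d] i3[of w] by simp
    also have "\<dots> \<le> (2/3) * (sc / sa) * (m3_const M X * sa^3) + (1/3) * (sa^2 / sc^2) * (m3_const M X * sc^3)"
      using mf(2)[of d] mf(2)[of w] sa sc unfolding sa_def[symmetric] sc_def[symmetric]
      by (intro add_mono mult_left_mono) simp_all
    also have "\<dots> = m3_const M X * sa^2 * sc"
      using sa sc by (simp add: field_simps power3_eq_cube power2_eq_square)
    also have "sa^2 = d \<bullet> (?S *v d)" unfolding sa_def qd by simp
    finally show ?thesis unfolding sc_def .
  qed
qed

lemma int_vec:
  fixes e :: "'a \<Rightarrow> real" and F :: "'a \<Rightarrow> real^'n"
  assumes ie: "integrable M e" and mF: "F \<in> borel_measurable M" and Fb: "AE \<omega> in M. norm (F \<omega>) \<le> C"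
  shows "integrable M (\<lambda>\<omega>. e \<omega> *\<^sub>R F \<omega>)"
proof (rule Bochner_Integration.integrable_bound)
  show "integrable M (\<lambda>\<omega>. \<bar>e \<omega>\<bar> * \<bar>C\<bar>)" using ie by simp
  show "(\<lambda>\<omega>. e \<omega> *\<^sub>R F \<omega>) \<in> borel_measurable M" using ie mF by measurable
  show "AE \<omega> in M. norm (e \<omega> *\<^sub>R F \<omega>) \<le> norm (\<bar>e \<omega>\<bar> * \<bar>C\<bar>)"
    using Fb by eventually_elim (simp add: abs_mult mult_left_mono)
qed

lemma normX_bound:
  fixes x :: "real^'n"
  assumes "\<forall>i. \<bar>x $ i\<bar> \<le> b"
  shows "norm x \<le> real CARD('n) * b"
proof -
  have "norm x \<le> (\<Sum>i\<in>UNIV. \<bar>x $ i\<bar>)" by (rule norm_le_l1_cart)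
  also have "\<dots> \<le> (\<Sum>i\<in>(UNIV::'n set). b)" using assms by (intro sum_mono) auto
  finally show ?thesis by simp
qed

lemma drop_coord_linear: "bounded_linear (drop_coord idx :: real^'p \<Rightarrow> real^'q)"
proof -
  define Pm :: "real^'p^'q" where "Pm = (\<chi> k i. if i = idx k then 1 else 0)"
  have "drop_coord idx = (\<lambda>z. Pm *v z)"
    by (auto simp: fun_eq_iff drop_coord_def Pm_def vec_eq_iff matrix_vector_mult_def sdelta1)
  then show ?thesis by simp
qed

lemma drop_coord_scaleR: "drop_coord idx (c *\<^sub>R x) = c *\<^sub>R drop_coord idx x"
  by (simp add: drop_coord_def vec_eq_iff)

lemma pointwise:
  fixes M :: "'a measure" and X :: "'a \<Rightarrow> real^'p::finite" and Y :: "'a \<Rightarrow> real"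
    and K :: "real^'p \<Rightarrow> real measure"
    and \<tau> :: real and bstar tstar \<beta> :: "real^'p"
    and j :: 'p and idx :: "'q::finite \<Rightarrow> 'p"
    and Sh :: "real^'p^'p" and Shj :: "real^'q^'q"
    and fu se be bX r0 :: real
  assumes P: "prob_space M" and mX[measurable]: "X \<in> borel_measurable M" and mY[measurable]: "Y \<in> borel_measurable M"
    and tau: "0 < \<tau>" "\<tau> < 1"
    and C: "is_cond_distr M X Y K" and QES: "model_QES M X K \<tau> bstar tstar"
    and S: "is_psd_sqrt Sh (second_moment M X)"
    and Sj: "is_psd_sqrt Shj (second_moment M (\<lambda>\<omega>. drop_coord idx (X \<omega>)))"
    and A: "conditionA M X K bstar fu se be"
    and Xb: "AE \<omega> in M. \<forall>i. \<bar>X \<omega> $ i\<bar> \<le> bX"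
    and bet: "norm (Sh *v (\<beta> - bstar)) \<le> r0" and bX0: "0 \<le> bX"
  shows "norm (\<integral>\<omega>. efun \<tau> tstar (Y \<omega>) (X \<omega>) \<beta> *\<^sub>R (matrix_inv Shj *v drop_coord idx (X \<omega>)) \<partial>M)
           \<le> norm (\<integral>\<omega>. efun \<tau> tstar (Y \<omega>) (X \<omega>) \<beta> *\<^sub>R (matrix_inv Sh *v X \<omega>) \<partial>M)"
    and "norm (\<integral>\<omega>. efun \<tau> tstar (Y \<omega>) (X \<omega>) \<beta> *\<^sub>R (matrix_inv Sh *v X \<omega>) \<partial>M) \<le> fu * m3_const M X * r0\<^sup>2 / 2"
    and "(AE \<omega> in M. \<bar>X \<omega> $ j - drop_coord idx (X \<omega>) \<bullet> gstar\<bar> \<le> bX) \<Longrightarrow>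
         \<bar>\<integral>\<omega>. efun \<tau> tstar (Y \<omega>) (X \<omega>) \<beta> * (X \<omega> $ j - drop_coord idx (X \<omega>) \<bullet> gstar) \<partial>M\<bar> \<le> fu * bX * r0\<^sup>2 / 2"
proof -
  interpret prob_space M by fact
  let ?S = "second_moment M X"
  let ?Ai = "matrix_inv Sh"
  let ?Bi = "matrix_inv Shj"
  define e where "e \<omega> = efun \<tau> tstar (Y \<omega>) (X \<omega>) \<beta>" for \<omega>
  define \<delta> where "\<delta> = \<beta> - bstar"
  have fu0: "0 < fu" using A by (simp add: conditionA_def)
  have r00: "0 \<le> r0" using bet norm_ge_zero order_trans by blast
  have qd: "\<delta> \<bullet> (?S *v \<delta>) \<le> r0^2"
  proof -
    have "(norm (Sh *v \<delta>))^2 \<le> r0^2" using bet unfolding \<delta>_def by (intro power_mono) simp_all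
    then show ?thesis using psd_quad[OF S, of \<delta>] by linarith
  qed
  have qd2: "(\<integral>\<omega>. (X \<omega> \<bullet> \<delta>)^2 \<partial>M) = \<delta> \<bullet> (?S *v \<delta>)" and iq: "integrable M (\<lambda>\<omega>. (X \<omega> \<bullet> \<delta>)^2)"
    using quad_int[OF P mX Xb, of \<delta>] by simp_all
  note EB = exp_bound[OF P mX mY C QES A tau Xb]
  have ie: "integrable M e"
    unfolding e_def[abs_def] using EB[of "\<lambda>_. 1" 1 \<beta>] by simp
  have ieX: "integrable M (\<lambda>\<omega>. e \<omega> *\<^sub>R X \<omega>)"
    by (rule int_vec[OF ie mX]) (use Xb in \<open>auto elim!: eventually_mono intro: normX_bound\<close>)
  have eq1: "(\<integral>\<omega>. e \<omega> *\<^sub>R (?Ai *v X \<omega>) \<partial>M) = ?Ai *v (\<integral>\<omega>. e \<omega> *\<^sub>R X \<omega> \<partial>M)"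
  proof -
    have "(\<integral>\<omega>. e \<omega> *\<^sub>R (?Ai *v X \<omega>) \<partial>M) = (\<integral>\<omega>. ?Ai *v (e \<omega> *\<^sub>R X \<omega>) \<partial>M)"
      by (simp add: matrix_vector_mult_scaleR)
    also have "\<dots> = ?Ai *v (\<integral>\<omega>. e \<omega> *\<^sub>R X \<omega> \<partial>M)"
      by (rule integral_bounded_linear[OF matrix_vector_mul_bounded_linear ieX])
    finally show ?thesis .
  qed
  have eq2: "(\<integral>\<omega>. e \<omega> *\<^sub>R (?Bi *v drop_coord idx (X \<omega>)) \<partial>M) = ?Bi *v drop_coord idx (\<integral>\<omega>. e \<omega> *\<^sub>R X \<omega> \<partial>M)"
  proof -
    have bl: "bounded_linear (\<lambda>z. ?Bi *v drop_coord idx z)"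
      by (rule bounded_linear_compose[OF matrix_vector_mul_bounded_linear[of ?Bi] drop_coord_linear[of idx]])
    have "(\<integral>\<omega>. e \<omega> *\<^sub>R (?Bi *v drop_coord idx (X \<omega>)) \<partial>M) = (\<integral>\<omega>. ?Bi *v drop_coord idx (e \<omega> *\<^sub>R X \<omega>) \<partial>M)"
      by (simp add: matrix_vector_mult_scaleR drop_coord_scaleR)
    also have "\<dots> = ?Bi *v drop_coord idx (\<integral>\<omega>. e \<omega> *\<^sub>R X \<omega> \<partial>M)"
      by (rule integral_bounded_linear[OF bl ieX])
    finally show ?thesis .
  qed
  have Sjeq: "second_moment M (\<lambda>\<omega>. drop_coord idx (X \<omega>)) = (\<chi> k l. ?S $ idx k $ idx l)"
    by (simp add: second_moment_def drop_coord_def)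
  show "norm (\<integral>\<omega>. efun \<tau> tstar (Y \<omega>) (X \<omega>) \<beta> *\<^sub>R (?Bi *v drop_coord idx (X \<omega>)) \<partial>M)
           \<le> norm (\<integral>\<omega>. efun \<tau> tstar (Y \<omega>) (X \<omega>) \<beta> *\<^sub>R (?Ai *v X \<omega>) \<partial>M)"
    using schur_norm[OF S Sj[unfolded Sjeq], of "\<integral>\<omega>. e \<omega> *\<^sub>R X \<omega> \<partial>M"] eq1 eq2
    unfolding e_def[symmetric] by (simp add: drop_coord_def)
  show "norm (\<integral>\<omega>. efun \<tau> tstar (Y \<omega>) (X \<omega>) \<beta> *\<^sub>R (?Ai *v X \<omega>) \<partial>M) \<le> fu * m3_const M X * r0\<^sup>2 / 2"
  proof -
    define U2 where "U2 = (\<integral>\<omega>. e \<omega> *\<^sub>R (?Ai *v X \<omega>) \<partial>M)"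
    have m30: "0 \<le> m3_const M X" by (rule m3_facts(1)[OF P mX Xb S])
    have "norm U2 \<le> fu * m3_const M X * r0\<^sup>2 / 2"
    proof (cases "U2 = 0")
      case True then show ?thesis using fu0 m30 by simp
    next
      case False
      define u where "u = (1 / norm U2) *\<^sub>R U2"
      define w where "w = ?Ai *v u"
      obtain Kc where Kc: "Kc > 0" "\<And>z. norm (?Ai *v z) \<le> norm z * Kc"
        using bounded_linear.pos_bounded[OF matrix_vector_mul_bounded_linear[of ?Ai]] by blast
      have iAX: "integrable M (\<lambda>\<omega>. e \<omega> *\<^sub>R (?Ai *v X \<omega>))"
      proof (rule int_vec[OF ie])
        show "(\<lambda>\<omega>. ?Ai *v X \<omega>) \<in> borel_measurable M"
          using measurable_compose[OF mX borel_measurable_continuous_onI[OF linear_continuous_on[OF matrix_vector_mul_bounded_linear[of ?Ai]]]] .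
        show "AE \<omega> in M. norm (?Ai *v X \<omega>) \<le> real CARD('p) * bX * Kc"
          using Xb
        proof eventually_elim
          case (elim \<omega>)
          have "norm (?Ai *v X \<omega>) \<le> norm (X \<omega>) * Kc" by (rule Kc(2))
          also have "\<dots> \<le> real CARD('p) * bX * Kc" using normX_bound[OF elim] Kc(1) by (simp add: mult_right_mono)
          finally show ?case .
        qed
      qed
      have nU: "norm U2 = U2 \<bullet> u" using False by (simp add: u_def power2_norm_eq_inner[symmetric] power2_eq_square)
      also have "\<dots> = (\<integral>\<omega>. (e \<omega> *\<^sub>R (?Ai *v X \<omega>)) \<bullet> u \<partial>M)" unfolding U2_def by (rule integral_inner_left[symmetric]) (rule iAX)
      also have "\<dots> = (\<integral>\<omega>. e \<omega> * (X \<omega> \<bullet> w) \<partial>M)"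
        using tr_dot[of ?Ai] psd_inv(3)[OF S] by (simp add: w_def)
      also have "\<dots> \<le> \<bar>\<integral>\<omega>. e \<omega> * (X \<omega> \<bullet> w) \<partial>M\<bar>" by simp
      also have "\<dots> \<le> (\<integral>\<omega>. fu * (X \<omega> \<bullet> \<delta>)^2 * \<bar>X \<omega> \<bullet> w\<bar> / 2 \<partial>M)"
      proof -
        have gb: "AE \<omega> in M. \<bar>X \<omega> \<bullet> w\<bar> \<le> bX * (\<Sum>i\<in>UNIV. \<bar>w $ i\<bar>)"
          using Xb by eventually_elim (rule dotb)
        show ?thesis using EB[OF _ gb, of \<beta>] unfolding e_def \<delta>_def by simp
      qed
      also have "\<dots> = fu / 2 * (\<integral>\<omega>. (X \<omega> \<bullet> \<delta>)^2 * \<bar>X \<omega> \<bullet> w\<bar> \<partial>M)"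
        by (simp add: field_simps)
      also have "\<dots> \<le> fu / 2 * (m3_const M X * (\<delta> \<bullet> (?S *v \<delta>)) * sqrt (w \<bullet> (?S *v w)))"
        using m3_cross[OF P mX Xb S, of \<delta> w] fu0 by (intro mult_left_mono) simp_all
      also have "w \<bullet> (?S *v w) = 1"
      proof -
        have "Sh *v w = u" by (simp add: w_def matrix_vector_mul_assoc psd_inv(1)[OF S])
        then show ?thesis using psd_quad[OF S, of w] False by (simp add: u_def)
      qed
      also have "fu / 2 * (m3_const M X * (\<delta> \<bullet> (?S *v \<delta>)) * sqrt 1) \<le> fu / 2 * (m3_const M X * r0^2)"
        using qd m30 fu0 by (simp add: mult_left_mono)
      finally show ?thesis by simp
    qed
    then show ?thesis unfolding U2_def e_def .
  qed
  show "(AE \<omega> in M. \<bar>X \<omega> $ j - drop_coord idx (X \<omega>) \<bullet> gstar\<bar> \<le> bX) \<Longrightarrow>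
         \<bar>\<integral>\<omega>. efun \<tau> tstar (Y \<omega>) (X \<omega>) \<beta> * (X \<omega> $ j - drop_coord idx (X \<omega>) \<bullet> gstar) \<partial>M\<bar> \<le> fu * bX * r0\<^sup>2 / 2"
  proof -
    assume gb: "AE \<omega> in M. \<bar>X \<omega> $ j - drop_coord idx (X \<omega>) \<bullet> gstar\<bar> \<le> bX"
    define g where "g x = x $ j - drop_coord idx x \<bullet> gstar" for x :: "real^'p"
    have geq: "g = (\<lambda>x. x $ j - (\<Sum>k\<in>UNIV. x $ idx k * gstar $ k))"
      by (auto simp: fun_eq_iff g_def drop_coord_def inner_vec_def)
    have mg: "g \<in> borel_measurable borel" unfolding geq by measurable
    have gb': "AE \<omega> in M. \<bar>g (X \<omega>)\<bar> \<le> bX" using gb by (simp add: g_def)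
    have "\<bar>\<integral>\<omega>. e \<omega> * g (X \<omega>) \<partial>M\<bar> \<le> (\<integral>\<omega>. fu * (X \<omega> \<bullet> \<delta>)^2 * \<bar>g (X \<omega>)\<bar> / 2 \<partial>M)"
      using EB[OF mg gb', of \<beta>] unfolding e_def \<delta>_def by simp
    also have "\<dots> \<le> (\<integral>\<omega>. fu * bX / 2 * (X \<omega> \<bullet> \<delta>)^2 \<partial>M)"
    proof (rule integral_mono_AE')
      show "integrable M (\<lambda>\<omega>. fu * bX / 2 * (X \<omega> \<bullet> \<delta>)^2)" using iq by simp
      show "AE \<omega> in M. fu * (X \<omega> \<bullet> \<delta>)^2 * \<bar>g (X \<omega>)\<bar> / 2 \<le> fu * bX / 2 * (X \<omega> \<bullet> \<delta>)^2"
        using gb' proof eventually_elim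
        case (elim \<omega>)
        have "fu * (X \<omega> \<bullet> \<delta>)^2 * \<bar>g (X \<omega>)\<bar> \<le> fu * (X \<omega> \<bullet> \<delta>)^2 * bX"
          using elim fu0 by (intro mult_left_mono) simp_all
        then show ?case by (simp add: field_simps)
      qed
      show "AE \<omega> in M. 0 \<le> fu * bX / 2 * (X \<omega> \<bullet> \<delta>)^2" using fu0 bX0 by simp
    qed
    also have "\<dots> = fu * bX / 2 * (\<delta> \<bullet> (?S *v \<delta>))" using qd2 by simp
    also have "\<dots> \<le> fu * bX / 2 * r0^2" using qd fu0 bX0 by (intro mult_left_mono) simp_all
    finally show ?thesis by (simp add: g_def e_def)
  qed
qed

theorem mainTheorem9:
  fixes M :: "'a measure" and X :: "'a \<Rightarrow> real^'p::finite" and Y :: "'a \<Rightarrow> real"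
    and K :: "real^'p \<Rightarrow> real measure"
    and \<tau> :: real and bstar tstar :: "real^'p" and n :: nat and i1 :: 'p
    and j :: 'p and idx :: "'q::finite \<Rightarrow> 'p"
    and Sh :: "real^'p^'p" and Shj :: "real^'q^'q"
    and fu se be bX m4 r0 :: real
  assumes "prob_space M"
    and "X \<in> borel_measurable M" and "Y \<in> borel_measurable M"
    and "AE \<omega> in M. X \<omega> $ i1 = 1"
    and "0 < \<tau>" and "\<tau> < 1"
    and "is_cond_distr M X Y K"
    and "model_QES M X K \<tau> bstar tstar"
    and "pos_def_mat (second_moment M X)"
    and "is_psd_sqrt Sh (second_moment M X)"
    and "bij_betw idx UNIV (UNIV - {j})"
    and "is_psd_sqrt Shj (second_moment M (\<lambda>\<omega>. drop_coord idx (X \<omega>)))"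
    and "conditionA M X K bstar fu se be"
    and "conditionB M X n bstar tstar bX m4"
    and "r0 > 0"
  shows "(SUP \<beta>\<in>{\<beta>. norm (Sh *v (\<beta> - bstar)) \<le> r0}.
            norm (\<integral>\<omega>. efun \<tau> tstar (Y \<omega>) (X \<omega>) \<beta> *\<^sub>R
                        (matrix_inv Shj *v drop_coord idx (X \<omega>)) \<partial>M))
         \<le> (SUP \<beta>\<in>{\<beta>. norm (Sh *v (\<beta> - bstar)) \<le> r0}.
            norm (\<integral>\<omega>. efun \<tau> tstar (Y \<omega>) (X \<omega>) \<beta> *\<^sub>R (matrix_inv Sh *v X \<omega>) \<partial>M))
    \<and> (SUP \<beta>\<in>{\<beta>. norm (Sh *v (\<beta> - bstar)) \<le> r0}.
            norm (\<integral>\<omega>. efun \<tau> tstar (Y \<omega>) (X \<omega>) \<beta> *\<^sub>R (matrix_inv Sh *v X \<omega>) \<partial>M))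
         \<le> fu * m3_const M X * r0\<^sup>2 / 2
    \<and> (\<forall>gstar s0. conditionD M X n j idx gstar s0 (max (l0norm bstar) (l0norm tstar)) bX m4 \<longrightarrow>
         (SUP \<beta>\<in>{\<beta>. norm (Sh *v (\<beta> - bstar)) \<le> r0}.
            \<bar>\<integral>\<omega>. efun \<tau> tstar (Y \<omega>) (X \<omega>) \<beta> * (X \<omega> $ j - drop_coord idx (X \<omega>) \<bullet> gstar) \<partial>M\<bar>)
         \<le> fu * bX * r0\<^sup>2 / 2)"
proof -
  interpret prob_space M by fact
  let ?s = "max (l0norm bstar) (l0norm tstar)"
  have dc: "design_cond M X ?s bX m4" using assms(14) by (simp add: conditionB_def Let_def)
  have bX1: "1 \<le> bX" and inf: "AE \<omega> in M. infnorm (X \<omega>) \<le> bX" using dc by (simp_all add: design_cond_def)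
  have bX0: "0 \<le> bX" using bX1 by simp
  have Xb: "AE \<omega> in M. \<forall>i. \<bar>X \<omega> $ i\<bar> \<le> bX"
    using inf by eventually_elim (meson component_le_infnorm_cart order_trans)
  let ?B = "{\<beta>. norm (Sh *v (\<beta> - bstar)) \<le> r0}"
  have ne: "?B \<noteq> {}" using assms(15) by (auto intro!: exI[of _ bstar])
  note PW = pointwise[OF assms(1,2,3,5,6,7,8,10,12,13) Xb _ bX0]
  define f1 where "f1 \<beta> = norm (\<integral>\<omega>. efun \<tau> tstar (Y \<omega>) (X \<omega>) \<beta> *\<^sub>R
                        (matrix_inv Shj *v drop_coord idx (X \<omega>)) \<partial>M)" for \<beta>
  define f2 where "f2 \<beta> = norm (\<integral>\<omega>. efun \<tau> tstar (Y \<omega>) (X \<omega>) \<beta> *\<^sub>R (matrix_inv Sh *v X \<omega>) \<partial>M)" for \<beta>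
  have p1: "f1 \<beta> \<le> f2 \<beta>" if "\<beta> \<in> ?B" for \<beta> using PW(1)[of \<beta>] that by (simp add: f1_def f2_def)
  have p2: "f2 \<beta> \<le> fu * m3_const M X * r0\<^sup>2 / 2" if "\<beta> \<in> ?B" for \<beta> using PW(2)[of \<beta>] that by (simp add: f2_def)
  have bdd: "bdd_above (f2 ` ?B)" using p2 by (intro bdd_aboveI2[where M="fu * m3_const M X * r0\<^sup>2 / 2"]) blast
  have s1: "(SUP \<beta>\<in>?B. f1 \<beta>) \<le> (SUP \<beta>\<in>?B. f2 \<beta>)"
    by (rule cSUP_mono[OF ne bdd]) (use p1 in blast)
  have s2: "(SUP \<beta>\<in>?B. f2 \<beta>) \<le> fu * m3_const M X * r0\<^sup>2 / 2"
    by (rule cSUP_least[OF ne]) (use p2 in blast)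
  have s3: "\<forall>gstar s0. conditionD M X n j idx gstar s0 ?s bX m4 \<longrightarrow>
         (SUP \<beta>\<in>?B. \<bar>\<integral>\<omega>. efun \<tau> tstar (Y \<omega>) (X \<omega>) \<beta> * (X \<omega> $ j - drop_coord idx (X \<omega>) \<bullet> gstar) \<partial>M\<bar>)
         \<le> fu * bX * r0\<^sup>2 / 2"
  proof (intro allI impI)
    fix gstar s0 assume D: "conditionD M X n j idx gstar s0 ?s bX m4"
    have gb: "AE \<omega> in M. \<bar>X \<omega> $ j - drop_coord idx (X \<omega>) \<bullet> gstar\<bar> \<le> bX"
      using D by (simp add: conditionD_def)
    show "(SUP \<beta>\<in>?B. \<bar>\<integral>\<omega>. efun \<tau> tstar (Y \<omega>) (X \<omega>) \<beta> * (X \<omega> $ j - drop_coord idx (X \<omega>) \<bullet> gstar) \<partial>M\<bar>)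
         \<le> fu * bX * r0\<^sup>2 / 2"
      by (rule cSUP_least[OF ne]) (use PW(3)[OF _ gb] in blast)
  qed
  show ?thesis using s1 s2 s3 unfolding f1_def f2_def by blast
qed

end
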